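(* Let $g:\mathcal{D}([0,\infty),\mathbb{R})\to\mathcal{D}([0,\infty),\mathbb{R})$ be the map $$g:(W(t))_{t\geq 0} \mapsto \left(W\Big(\inf\Big\{s\geq 0: \int_0^s \mathbf{1}_{\{W(u) \geq 0\}}\, du \geq t\Big\}\Big)\right)_{t\geq 0}.$$ Let $D_g\subseteq \mathcal{D}([0,\infty),\mathbb{R})$ be the set of discontinuity points of $g$ with respect to the Skorokhod metric $d_\infty$. Then $\mathbb{P}((B_t)_{t\geq 0} \in D_g)=0$, where $B$ is a standard Brownian motion.
   Context: $\mathcal{D}([0,T],\mathbb{R})$ and $\mathcal{D}([0,\infty),\mathbb{R})$ are the spaces of càdlàg paths. For $T>0$ let $\Lambda_T$ be the set of continuous strictly increasing bijections $[0,T]\to[0,T]$, and for $X,Y\in\mathcal{D}([0,T],\mathbb{R})$, $d_T(X,Y):=\inf_{\lambda\in\Lambda_T}\{\sup_{t\in[0,T]}|t-\lambda(t)|\vee\sup_{t\in[0,T]}|X(t)-Y(\lambda(t))|\}$. For $m>0$ let $g_m(t)=(m-t)\mathbf{1}_{\{m-1\le t\le m\}}+\mathbf{1}_{\{t\le m-1\}}$ and $\psi_m:\mathcal{D}([0,\infty),\mathbb{R})\to\mathcal{D}([0,m],\mathbb{R})$, $\psi_m((X(t))_{t\ge0})=(X(t)g_m(t))_{0\le t\le m}$. Then $d_\infty(X,Y):=\sum_{T\in\mathbb{N}}2^{-T}(1\wedge d_T(\psi_T(X),\psi_T(Y)))$. *)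

theory Defs
  imports "HOL-Probability.Probability"
begin

(* Cadlag paths on [0,\<infinity>) (values at negative times are irrelevant) *)
definition cadlag :: "(real \<Rightarrow> real) \<Rightarrow> bool" where
  "cadlag X \<longleftrightarrow> (\<forall>t\<ge>0. (X \<longlongrightarrow> X t) (at_right t) \<and>
                        (t > 0 \<longrightarrow> (\<exists>l. (X \<longlongrightarrow> l) (at_left t))))"

definition Lambda :: "real \<Rightarrow> (real \<Rightarrow> real) set" where
  "Lambda T = {l. continuous_on {0..T} l \<and> strict_mono_on {0..T} l \<and> bij_betw l {0..T} {0..T}}"

(* Skorokhod J1 distance d_T on D([0,T]) (ereal-valued, so it is defined for any functions) *)
definition skor_d :: "real \<Rightarrow> (real \<Rightarrow> real) \<Rightarrow> (real \<Rightarrow> real) \<Rightarrow> ereal" where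
  "skor_d T X Y = (INF l\<in>Lambda T. max (SUP t\<in>{0..T}. ereal \<bar>t - l t\<bar>)
                                        (SUP t\<in>{0..T}. ereal \<bar>X t - Y (l t)\<bar>))"

definition cutoff :: "real \<Rightarrow> real \<Rightarrow> real" where
  "cutoff m t = (m - t) * (if m - 1 \<le> t \<and> t \<le> m then 1 else 0) + (if t \<le> m - 1 then 1 else 0)"

definition psi :: "real \<Rightarrow> (real \<Rightarrow> real) \<Rightarrow> (real \<Rightarrow> real)" where
  "psi m X = (\<lambda>t. X t * cutoff m t)"

definition skor_dinf :: "(real \<Rightarrow> real) \<Rightarrow> (real \<Rightarrow> real) \<Rightarrow> real" where
  "skor_dinf X Y = (\<Sum>n. (1/2) ^ (Suc n) *
      real_of_ereal (min 1 (skor_d (real (Suc n)) (psi (real (Suc n)) X) (psi (real (Suc n)) Y))))"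

(* inverse of the occupation time of [0,\<infinity>); convention: if the set is empty, the value is 0 *)
definition occ_inv :: "(real \<Rightarrow> real) \<Rightarrow> real \<Rightarrow> real" where
  "occ_inv W t = Inf {s. s \<ge> 0 \<and> integral {0..s} (\<lambda>u. if W u \<ge> 0 then 1 else 0) \<ge> t}"

definition gmap :: "(real \<Rightarrow> real) \<Rightarrow> (real \<Rightarrow> real)" where
  "gmap W = (\<lambda>t. if {s. s \<ge> 0 \<and> integral {0..s} (\<lambda>u. if W u \<ge> 0 then 1 else 0) \<ge> t} = {}
                  then 0 else W (occ_inv W t))"

definition Dg :: "(real \<Rightarrow> real) set" where
  "Dg = {X. cadlag X \<and> \<not> (\<forall>e>0. \<exists>d>0. \<forall>Y. cadlag Y \<and> skor_dinf X Y < d \<longrightarrow>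
                                     skor_dinf (gmap X) (gmap Y) < e)}"

definition std_brownian_motion :: "'a measure \<Rightarrow> ('a \<Rightarrow> real \<Rightarrow> real) \<Rightarrow> bool" where
  "std_brownian_motion M B \<longleftrightarrow> prob_space M \<and>
     (\<forall>t\<ge>0. (\<lambda>\<omega>. B \<omega> t) \<in> borel_measurable M) \<and>
     (\<forall>\<omega>\<in>space M. B \<omega> 0 = 0 \<and> continuous_on {0..} (B \<omega>)) \<and>
     (\<forall>s t. 0 \<le> s \<and> s < t \<longrightarrow>
        distributed M lborel (\<lambda>\<omega>. B \<omega> t - B \<omega> s) (\<lambda>x. ennreal (normal_density 0 (sqrt (t - s)) x))) \<and>
     (\<forall>(n::nat) (ts::nat \<Rightarrow> real). ts 0 \<ge> 0 \<and> (\<forall>i<n. ts i < ts (Suc i)) \<longrightarrow>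
        prob_space.indep_vars M (\<lambda>_. borel) (\<lambda>i \<omega>. B \<omega> (ts (Suc i)) - B \<omega> (ts i)) {..<n})"

end

theory Submission
  imports Defs
begin

lemma rc_seq:
  fixes f :: "real \<Rightarrow> real"
  assumes "(f \<longlongrightarrow> f t) (at_right t)" "u \<longlonglongrightarrow> t" "\<And>n. u n \<ge> t"
  shows "(\<lambda>n. f (u n)) \<longlonglongrightarrow> f t"
proof -
  have "at t within {t..} = at_right t" by (rule at_within_Ici_at_right)
  then have "continuous (at t within {t..}) f" using assms(1) by (simp add: continuous_within)
  then show ?thesis using assms(2,3) unfolding continuous_within_sequentially by (auto simp: o_def)
qed

definition capx :: "nat \<Rightarrow> real \<Rightarrow> real" where
  "capx n x = real_of_int \<lceil>real (Suc n) * x\<rceil> / real (Suc n)"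

lemma capx_ge: "x \<le> capx n x"
  unfolding capx_def by (simp add: field_simps)

lemma capx_le: "capx n x \<le> x + 1 / real (Suc n)"
proof -
  have "real_of_int \<lceil>real (Suc n) * x\<rceil> \<le> real (Suc n) * x + 1" by linarith
  then have "real_of_int \<lceil>real (Suc n) * x\<rceil> / real (Suc n) \<le> (real (Suc n) * x + 1) / real (Suc n)"
    by (rule divide_right_mono) simp
  also have "\<dots> = x + 1 / real (Suc n)" by (simp add: field_simps)
  finally show ?thesis unfolding capx_def .
qed

lemma capx_lim: "(\<lambda>n. capx n x) \<longlonglongrightarrow> x"
proof (rule tendsto_sandwich[of "\<lambda>n. x" _ _ "\<lambda>n. x + 1 / real (Suc n)"])
  show "\<forall>\<^sub>F n in sequentially. x \<le> capx n x" by (simp add: capx_ge)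
  show "\<forall>\<^sub>F n in sequentially. capx n x \<le> x + 1 / real (Suc n)" by (intro always_eventually allI capx_le)
  show "(\<lambda>n. x) \<longlonglongrightarrow> x" by simp
  have "(\<lambda>n. 1 / real (Suc n)) \<longlonglongrightarrow> 0" using LIMSEQ_inverse_real_of_nat by (simp add: inverse_eq_divide)
  then show "(\<lambda>n. x + 1 / real (Suc n)) \<longlonglongrightarrow> x" using tendsto_add[of "\<lambda>n. x" x sequentially] by fastforce
qed

lemma capx_nonneg: "0 \<le> x \<Longrightarrow> 0 \<le> capx n x"
  using capx_ge[of x n] by linarith

lemma joint_meas:
  fixes F :: "'a \<Rightarrow> real \<Rightarrow> real"
  assumes rc: "\<And>x t. x \<in> space N \<Longrightarrow> t \<ge> 0 \<Longrightarrow> (F x \<longlongrightarrow> F x t) (at_right t)"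
  and meas: "\<And>t. t \<ge> 0 \<Longrightarrow> (\<lambda>x. F x t) \<in> borel_measurable N"
  shows "(\<lambda>p. F (fst p) (max 0 (snd p))) \<in> borel_measurable (N \<Otimes>\<^sub>M (lborel :: real measure))"
proof (rule borel_measurable_LIMSEQ_metric)
  fix i :: nat
  have eq: "(\<lambda>p. F (fst p) (capx i (max 0 (snd p)))) =
     (\<lambda>p. (\<lambda>k p. F (fst p) (max 0 (real_of_int k / real (Suc i)))) (\<lceil>real (Suc i) * max 0 (snd p)\<rceil>) p)"
  proof
    fix p :: "'a \<times> real"
    have "capx i (max 0 (snd p)) \<ge> 0" by (rule capx_nonneg) simp
    then show "F (fst p) (capx i (max 0 (snd p))) = (\<lambda>k p. F (fst p) (max 0 (real_of_int k / real (Suc i)))) (\<lceil>real (Suc i) * max 0 (snd p)\<rceil>) p"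
      unfolding capx_def by simp
  qed
  show "(\<lambda>p. F (fst p) (capx i (max 0 (snd p)))) \<in> borel_measurable (N \<Otimes>\<^sub>M (lborel :: real measure))"
    unfolding eq
  proof (rule measurable_compose_countable'[where I=UNIV and f="\<lambda>k p. F (fst p) (max 0 (real_of_int k / real (Suc i)))" and g="\<lambda>p. \<lceil>real (Suc i) * max 0 (snd p)\<rceil>"])
    fix k :: int assume "k \<in> (UNIV :: int set)"
    have "(\<lambda>x. F x (max 0 (real_of_int k / real (Suc i)))) \<in> borel_measurable N" by (rule meas) simp
    then show "(\<lambda>p. F (fst p) (max 0 (real_of_int k / real (Suc i)))) \<in> borel_measurable (N \<Otimes>\<^sub>M (lborel :: real measure))"
      by (rule measurable_compose[OF measurable_fst])
  next
    show "(\<lambda>p. \<lceil>real (Suc i) * max 0 (snd p)\<rceil>) \<in> N \<Otimes>\<^sub>M lborel \<rightarrow>\<^sub>M count_space UNIV" by measurable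
  qed simp
next
  fix p :: "'a \<times> real" assume p: "p \<in> space (N \<Otimes>\<^sub>M (lborel :: real measure))"
  show "(\<lambda>i. F (fst p) (capx i (max 0 (snd p)))) \<longlonglongrightarrow> F (fst p) (max 0 (snd p))"
    by (rule rc_seq[OF rc capx_lim capx_ge]) (use p in \<open>auto simp: space_pair_measure\<close>)
qed

definition indf :: "(real \<Rightarrow> real) \<Rightarrow> real \<Rightarrow> real" where
  "indf W = (\<lambda>u. if W u \<ge> 0 then 1 else 0)"

definition occ :: "(real \<Rightarrow> real) \<Rightarrow> real \<Rightarrow> real" where
  "occ W s = integral {0..s} (indf W)"

definition good :: "(real \<Rightarrow> real) \<Rightarrow> bool" where
  "good W \<longleftrightarrow> (\<forall>a b. 0 \<le> a \<longrightarrow> indf W integrable_on {a..b})"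

definition Tset :: "(real \<Rightarrow> real) \<Rightarrow> real \<Rightarrow> real set" where
  "Tset W t = {s. 0 \<le> s \<and> t \<le> occ W s}"

lemma gmap_eq: "gmap W t = (if Tset W t = {} then 0 else W (Inf (Tset W t)))"
  unfolding gmap_def occ_inv_def Tset_def occ_def indf_def by simp

lemma unif_cont:
  fixes X :: "real \<Rightarrow> real" and S :: real
  assumes "continuous_on {0..} X" "e > 0"
  shows "\<exists>r>0. \<forall>u\<in>{0..S}. \<forall>v\<in>{0..S}. \<bar>u - v\<bar> < r \<longrightarrow> \<bar>X u - X v\<bar> < e"
proof -
  have "continuous_on {0..S} X" using assms(1) by (rule continuous_on_subset) auto
  then have "uniformly_continuous_on {0..S} X" by (intro compact_uniformly_continuous) auto
  then show ?thesis using assms(2) unfolding uniformly_continuous_on_def dist_real_def by metis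
qed

lemma indf_bounds: "0 \<le> indf W u" "indf W u \<le> 1"
  unfolding indf_def by auto

lemma int_bounds:
  assumes "good W" "a \<le> b" "0 \<le> a"
  shows "0 \<le> integral {a..b} (indf W)" "integral {a..b} (indf W) \<le> b - a"
proof -
  have i: "indf W integrable_on {a..b}" using assms(1,3) good_def by blast
  show "0 \<le> integral {a..b} (indf W)" by (rule integral_nonneg[OF i]) (simp add: indf_bounds)
  have "integral {a..b} (indf W) \<le> integral {a..b} (\<lambda>x. 1::real)"
    by (rule integral_le[OF i]) (auto simp: indf_bounds)
  then show "integral {a..b} (indf W) \<le> b - a" using assms(2) by simp
qed

lemma occ_diff:
  assumes "good W" "0 \<le> a" "a \<le> b"
  shows "occ W b - occ W a = integral {a..b} (indf W)"
proof -
  have i: "indf W integrable_on {0..b}" using assms(1) good_def by simp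
  show ?thesis using Henstock_Kurzweil_Integration.integral_combine[OF assms(2,3) i] unfolding occ_def by simp
qed

lemma occ_neg: "s < 0 \<Longrightarrow> occ W s = 0"
  unfolding occ_def by simp

lemma occ_zero[simp]: "occ W 0 = 0"
  unfolding occ_def by simp

lemma occ_lip:
  assumes "good W" "a \<le> b"
  shows "0 \<le> occ W b - occ W a" "occ W b - occ W a \<le> b - a"
proof -
  have "0 \<le> occ W b - occ W a \<and> occ W b - occ W a \<le> b - a"
  proof (cases "0 \<le> a")
    case True
    then show ?thesis using occ_diff[OF assms(1) True assms(2)] int_bounds[OF assms True] by simp
  next
    case False
    then have oa: "occ W a = 0" by (simp add: occ_neg)
    show ?thesis
    proof (cases "0 \<le> b")
      case True
      then show ?thesis using occ_diff[OF assms(1) order_refl True] int_bounds[OF assms(1) True order_refl] oa False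
        by simp
    next
      case False
      then show ?thesis using oa assms(2) by (simp add: occ_neg)
    qed
  qed
  then show "0 \<le> occ W b - occ W a" "occ W b - occ W a \<le> b - a" by auto
qed

lemma occ_mono: "good W \<Longrightarrow> a \<le> b \<Longrightarrow> occ W a \<le> occ W b"
  using occ_lip(1) by fastforce

lemma occ_cont: "good W \<Longrightarrow> continuous_on UNIV (occ W)"
proof -
  assume g: "good W"
  have "\<bar>occ W x - occ W y\<bar> \<le> \<bar>x - y\<bar>" for x y
  proof (cases "x \<le> y")
    case True then show ?thesis using occ_lip[OF g True] by simp
  next
    case False then show ?thesis using occ_lip[OF g, of y x] by simp
  qed
  then show ?thesis unfolding continuous_on_iff dist_real_def by (metis le_less_trans)
qed

lemma Tset_props:
  assumes g: "good W" and s0: "0 \<le> s0" "t \<le> occ W s0"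
  defines "\<tau> \<equiv> Inf (Tset W t)"
  shows "Tset W t \<noteq> {}" "0 \<le> \<tau>" "\<tau> \<le> s0" "t \<le> occ W \<tau>" "\<And>s. 0 \<le> s \<Longrightarrow> s < \<tau> \<Longrightarrow> occ W s < t"
    "occ W \<tau> \<le> max t 0" "\<And>s. 0 \<le> s \<Longrightarrow> t \<le> occ W s \<Longrightarrow> \<tau> \<le> s"
proof -
  show ne: "Tset W t \<noteq> {}" using s0 unfolding Tset_def by auto
  have bdd: "bdd_below (Tset W t)" unfolding Tset_def by (rule bdd_belowI[of _ 0]) auto
  have cl: "closed (Tset W t)"
  proof -
    have "Tset W t = {0..} \<inter> {s. t \<le> occ W s}" unfolding Tset_def by auto
    moreover have "closed {s. t \<le> occ W s}"
      using occ_cont[OF g] by (intro closed_Collect_le) (auto intro: continuous_on_const)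
    ultimately show ?thesis by (simp add: closed_Int)
  qed
  have mem: "\<tau> \<in> Tset W t" unfolding \<tau>_def by (rule closed_contains_Inf[OF ne bdd cl])
  then show "0 \<le> \<tau>" "t \<le> occ W \<tau>" unfolding Tset_def by auto
  show lb: "\<And>s. 0 \<le> s \<Longrightarrow> t \<le> occ W s \<Longrightarrow> \<tau> \<le> s"
    unfolding \<tau>_def by (rule cInf_lower[OF _ bdd]) (simp add: Tset_def)
  then show "\<tau> \<le> s0" using s0 by blast
  show lt: "\<And>s. 0 \<le> s \<Longrightarrow> s < \<tau> \<Longrightarrow> occ W s < t"
    using lb by force
  show "occ W \<tau> \<le> max t 0"
  proof (cases "\<tau> = 0")
    case True then show ?thesis by simp
  next
    case False
    then have pos: "0 < \<tau>" using \<open>0 \<le> \<tau>\<close> by simp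
    have "isCont (occ W) \<tau>" using occ_cont[OF g] by (simp add: continuous_on_eq_continuous_at)
    then have "(occ W \<longlongrightarrow> occ W \<tau>) (at_left \<tau>)"
      by (simp add: isCont_def filterlim_at_split)
    moreover have "\<forall>\<^sub>F s in at_left \<tau>. occ W s \<le> t"
      using lt by (intro eventually_at_leftI[of 0]) (auto simp: pos less_imp_le)
    ultimately have "occ W \<tau> \<le> t"
      by (rule tendsto_upperbound) simp
    then show ?thesis by simp
  qed
qed

lemma int_zero:
  assumes "\<forall>u\<in>{a..b}. W u < 0"
  shows "integral {a..b} (indf W) = 0"
proof -
  have "integral {a..b} (indf W) = integral {a..b} (\<lambda>u. 0::real)"
  proof (rule integral_cong)
    fix x assume "x \<in> {a..b}"
    then have "W x < 0" using assms by blast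
    then show "indf W x = 0" by (simp add: indf_def)
  qed
  then show ?thesis by simp
qed

lemma int_one:
  assumes "\<forall>u\<in>{a..b}. W u \<ge> 0" "a \<le> b"
  shows "integral {a..b} (indf W) = b - a"
proof -
  have "integral {a..b} (indf W) = integral {a..b} (\<lambda>u. 1::real)"
  proof (rule integral_cong)
    fix x assume "x \<in> {a..b}"
    then have "W x \<ge> 0" using assms by blast
    then show "indf W x = 1" by (simp add: indf_def)
  qed
  then show ?thesis using assms(2) by simp
qed

lemma occ_sub:
  assumes g: "good W" and "0 \<le> p" "p \<le> c" "c \<le> d" "d \<le> q"
  shows "integral {c..d} (indf W) \<le> occ W q - occ W p"
proof -
  have "integral {c..d} (indf W) = occ W d - occ W c" using occ_diff[OF g, of c d] assms by simp
  moreover have "occ W c \<ge> occ W p" "occ W d \<le> occ W q" using occ_mono[OF g] assms by auto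
  ultimately show ?thesis by simp
qed

lemma tau_lower:
  fixes X W :: "real \<Rightarrow> real"
  assumes cont: "continuous_on {0..} X" and g: "good W" and tpos: "0 < \<tau>"
    and lt: "\<And>s. 0 \<le> s \<Longrightarrow> s < \<tau> \<Longrightarrow> occ W s < t" and ge: "t \<le> occ W \<tau>"
    and rel: "\<And>u. 0 \<le> u \<Longrightarrow> u \<le> \<tau> \<Longrightarrow> X u < - c \<Longrightarrow> W u < 0"
  shows "- c \<le> X \<tau>"
proof (rule ccontr)
  assume "\<not> - c \<le> X \<tau>"
  then have e: "0 < - c - X \<tau>" by simp
  have "\<tau> \<in> {0..}" using tpos by simp
  then obtain \<rho> where \<rho>: "\<rho> > 0" "\<And>u. u \<in> {0..} \<Longrightarrow> dist u \<tau> < \<rho> \<Longrightarrow> dist (X u) (X \<tau>) < - c - X \<tau>"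
    using cont e unfolding continuous_on_iff by metis
  define a where "a = max (\<tau>/2) (\<tau> - \<rho>/2)"
  have a: "0 \<le> a" "a < \<tau>" using tpos \<rho>(1) unfolding a_def by auto
  have neg: "\<forall>u\<in>{a..\<tau>}. W u < 0"
  proof
    fix u assume u: "u \<in> {a..\<tau>}"
    then have "0 \<le> u" "u \<le> \<tau>" using a by auto
    moreover have "dist u \<tau> < \<rho>" using u \<rho>(1) unfolding a_def dist_real_def by auto
    ultimately have "dist (X u) (X \<tau>) < - c - X \<tau>" using \<rho>(2) by simp
    then have "X u < - c" unfolding dist_real_def by linarith
    then show "W u < 0" using rel \<open>0 \<le> u\<close> \<open>u \<le> \<tau>\<close> by blast
  qed
  have "occ W \<tau> - occ W a = 0" using occ_diff[OF g a(1)] a(2) int_zero[OF neg] by simp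
  then have "t \<le> occ W a" using ge by simp
  then show False using lt[OF a] by simp
qed

lemma ind_integrable:
  fixes W :: "real \<Rightarrow> real"
  assumes m: "(\<lambda>u. W (max 0 u)) \<in> borel_measurable borel" and A: "A \<in> sets borel" and a: "0 \<le> a"
  shows "(\<lambda>u. if W u \<in> A then 1 else 0::real) integrable_on {a..b}"
proof -
  let ?E = "{u. W (max 0 u) \<in> A}"
  have "?E = (\<lambda>u. W (max 0 u)) -` A \<inter> space borel" by auto
  then have E: "?E \<in> sets borel" using measurable_sets[OF m A] by simp
  have I: "{a..b} \<in> sets borel" by simp
  have "?E \<inter> {a..b} \<in> sets borel" using E I by (metis sets.Int)
  then have "?E \<inter> {a..b} \<in> sets lebesgue" by (metis sets_lborel sets_completionI_sets)
  moreover have "bounded (?E \<inter> {a..b})" by (rule bounded_Int) simp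
  ultimately have "?E \<inter> {a..b} \<in> lmeasurable" by (intro bounded_set_imp_lmeasurable)
  then have "indicat_real ?E integrable_on {a..b}" by (simp add: integrable_on_indicator)
  then show ?thesis
  proof (rule integrable_eq)
    fix x assume "x \<in> {a..b}"
    then have "max 0 x = x" using a by simp
    then show "indicat_real ?E x = (if W x \<in> A then 1 else 0)" by (simp add: indicator_def)
  qed
qed

lemma good_meas:
  assumes "(\<lambda>u. W (max 0 u)) \<in> borel_measurable borel"
  shows "good W"
  unfolding good_def indf_def
proof (intro allI impI)
  fix a b :: real assume "0 \<le> a"
  then have "(\<lambda>u. if W u \<in> {0..} then 1 else 0::real) integrable_on {a..b}"
    by (intro ind_integrable[OF assms]) auto
  then show "(\<lambda>u. if 0 \<le> W u then 1 else 0::real) integrable_on {a..b}" by simp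
qed

lemma cont_meas:
  fixes X :: "real \<Rightarrow> real"
  assumes "continuous_on {0..} X"
  shows "(\<lambda>u. X (max 0 u)) \<in> borel_measurable borel"
proof (rule borel_measurable_continuous_onI)
  have "continuous_on UNIV (\<lambda>u. max 0 u :: real)" by (intro continuous_intros)
  moreover have "(\<lambda>u. max 0 u :: real) ` UNIV \<subseteq> {0..}" by auto
  ultimately show "continuous_on UNIV (\<lambda>u. X (max 0 u))"
    by (rule continuous_on_compose2[OF assms])
qed

definition thin :: "(real \<Rightarrow> real) \<Rightarrow> bool" where
  "thin X \<longleftrightarrow> (\<forall>(S::real) (\<eta>::real). 0 < \<eta> \<longrightarrow> (\<exists>\<delta>>0. integral {0..S} (\<lambda>u. if \<bar>X u\<bar> < \<delta> then 1 else 0) < \<eta>))"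

lemma D3:
  fixes X :: "real \<Rightarrow> real" and N \<epsilon> :: real
  assumes cX: "continuous_on {0..} X" and th: "thin X" and unb: "\<forall>c. \<exists>s\<ge>0. c \<le> occ X s"
    and eps: "0 < \<epsilon>"
  shows "\<exists>S \<delta>. 0 \<le> S \<and> 0 < \<delta> \<and> (\<forall>Y. good Y \<and> (\<forall>s\<in>{0..S}. \<bar>X s - Y s\<bar> < \<delta>) \<longrightarrow>
            (\<forall>t\<in>{0..N}. \<bar>gmap X t - gmap Y t\<bar> < \<epsilon>))"
proof -
  have mX: "(\<lambda>u. X (max 0 u)) \<in> borel_measurable borel" by (rule cont_meas[OF cX])
  have gX: "good X" by (rule good_meas[OF mX])
  obtain S0 where S0: "0 \<le> S0" "N + 2 \<le> occ X S0" using unb by blast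
  have e2: "0 < \<epsilon>/2" using eps by simp
  obtain r where r: "r > 0" "\<forall>u\<in>{0..S0}. \<forall>v\<in>{0..S0}. \<bar>u - v\<bar> < r \<longrightarrow> \<bar>X u - X v\<bar> < \<epsilon>/2"
    using unif_cont[OF cX e2] by blast
  define \<eta> where "\<eta> = min (r/8) 1"
  have \<eta>: "0 < \<eta>" "\<eta> \<le> r/8" "\<eta> \<le> 1" using r(1) unfolding \<eta>_def by auto
  obtain \<delta>0 where \<delta>0: "\<delta>0 > 0" "integral {0..S0} (\<lambda>u. if \<bar>X u\<bar> < \<delta>0 then 1 else 0) < \<eta>"
    using th \<eta>(1) unfolding thin_def by blast
  define \<delta> where "\<delta> = min \<delta>0 (\<epsilon>/4)"
  have \<delta>: "0 < \<delta>" "\<delta> \<le> \<delta>0" "\<delta> \<le> \<epsilon>/4" using \<delta>0(1) eps unfolding \<delta>_def by auto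
  let ?h = "\<lambda>u. if \<bar>X u\<bar> < \<delta>0 then 1 else 0::real"
  have hint: "?h integrable_on {0..s}" for s
  proof -
    have "(\<lambda>u. if X u \<in> {x. \<bar>x\<bar> < \<delta>0} then 1 else 0::real) integrable_on {0..s}"
      by (rule ind_integrable[OF mX]) (auto intro: borel_open open_Collect_less continuous_intros)
    then show ?thesis by simp
  qed
  show ?thesis
  proof (intro exI conjI allI impI ballI)
    show "0 \<le> S0" by fact
    show "0 < \<delta>" by fact
    fix Y t assume YY: "good Y \<and> (\<forall>s\<in>{0..S0}. \<bar>X s - Y s\<bar> < \<delta>)" and t: "t \<in> {0..N}"
    have gY: "good Y" and close: "\<And>s. s \<in> {0..S0} \<Longrightarrow> \<bar>X s - Y s\<bar> < \<delta>" using YY by auto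
    have occd: "\<bar>occ Y s - occ X s\<bar> \<le> \<eta>" if s: "s \<in> {0..S0}" for s
    proof -
      have iY: "indf Y integrable_on {0..s}" and iX: "indf X integrable_on {0..s}"
        using gY gX good_def by auto
      have "occ Y s - occ X s = integral {0..s} (\<lambda>u. indf Y u - indf X u)"
        unfolding occ_def by (rule integral_diff[OF iY iX, symmetric])
      also have "\<bar>\<dots>\<bar> \<le> integral {0..s} ?h"
      proof -
        have "norm (integral {0..s} (\<lambda>u. indf Y u - indf X u)) \<le> integral {0..s} ?h"
        proof (rule integral_norm_bound_integral)
          show "(\<lambda>u. indf Y u - indf X u) integrable_on {0..s}" by (rule integrable_diff[OF iY iX])
          show "?h integrable_on {0..s}" by (rule hint)
          fix u assume u: "u \<in> {0..s}"
          then have "\<bar>X u - Y u\<bar> < \<delta>" using close s by auto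
          then show "norm (indf Y u - indf X u) \<le> ?h u"
            using \<delta>(2) unfolding indf_def by auto
        qed
        then show ?thesis by simp
      qed
      also have "\<dots> \<le> integral {0..S0} ?h"
        by (rule integral_subset_le) (use s hint in auto)
      also have "\<dots> < \<eta>" by fact
      finally show ?thesis by simp
    qed
    have S0in: "S0 \<in> {0..S0}" using S0 by simp
    have tN: "0 \<le> t" "t \<le> N" using t by auto
    have oYS0: "t \<le> occ Y S0" using occd[OF S0in] S0 \<eta> tN by linarith
    have oXS0: "t \<le> occ X S0" using S0 tN by linarith
    note TX = Tset_props[OF gX S0(1) oXS0]
    note TY = Tset_props[OF gY S0(1) oYS0]
    define \<tau>X where "\<tau>X = Inf (Tset X t)"
    define \<tau>Y where "\<tau>Y = Inf (Tset Y t)"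
    have gXt: "gmap X t = X \<tau>X" using TX(1) unfolding gmap_eq \<tau>X_def by simp
    have gYt: "gmap Y t = Y \<tau>Y" using TY(1) unfolding gmap_eq \<tau>Y_def by simp
    have \<tau>Xr: "0 \<le> \<tau>X" "\<tau>X \<le> S0" "t \<le> occ X \<tau>X" using TX unfolding \<tau>X_def by auto
    have \<tau>Yr: "0 \<le> \<tau>Y" "\<tau>Y \<le> S0" "t \<le> occ Y \<tau>Y" using TY unfolding \<tau>Y_def by auto
    show "\<bar>gmap X t - gmap Y t\<bar> < \<epsilon>"
    proof (cases "t = 0")
      case True
      have "\<tau>X \<le> 0" using TX(7)[of 0] True unfolding \<tau>X_def by simp
      moreover have "\<tau>Y \<le> 0" using TY(7)[of 0] True unfolding \<tau>Y_def by simp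
      ultimately have "\<tau>X = 0" "\<tau>Y = 0" using \<tau>Xr \<tau>Yr by auto
      then show ?thesis using gXt gYt close[of 0] S0 \<delta> by auto
    next
      case False
      then have tpos: "0 < t" using tN by simp
      have oXq: "t + \<eta> \<le> occ X S0" using S0 tN \<eta> by linarith
      have oXp: "t - \<eta> \<le> occ X S0" using S0 tN \<eta> by linarith
      note TQ = Tset_props[OF gX S0(1) oXq]
      note TP = Tset_props[OF gX S0(1) oXp]
      define q where "q = Inf (Tset X (t + \<eta>))"
      define p where "p = Inf (Tset X (t - \<eta>))"
      have qr: "0 \<le> q" "q \<le> S0" "t + \<eta> \<le> occ X q" "occ X q \<le> max (t + \<eta>) 0"
        using TQ unfolding q_def by auto
      have pr: "0 \<le> p" "p \<le> S0" "t - \<eta> \<le> occ X p"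
        using TP unfolding p_def by auto
      have "t \<le> occ Y q" using occd[of q] qr by auto
      then have Yq: "\<tau>Y \<le> q" using TY(7)[of q] qr unfolding \<tau>Y_def by simp
      have "t - \<eta> \<le> occ X \<tau>Y" using occd[of \<tau>Y] \<tau>Yr by auto
      then have pY: "p \<le> \<tau>Y" using TP(7)[of \<tau>Y] \<tau>Yr unfolding p_def by simp
      have Xq: "\<tau>X \<le> q" using TX(7)[of q] qr \<eta> unfolding \<tau>X_def by simp
      have pX: "p \<le> \<tau>X" using TP(7)[of \<tau>X] \<tau>Xr \<eta> unfolding p_def by simp
      have gap: "occ X q - occ X p \<le> 2 * \<eta>" using qr(4) pr(3) tpos \<eta> by auto
      have \<tau>Xpos: "0 < \<tau>X" using \<tau>Xr tpos by (cases "\<tau>X = 0") auto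
      have \<tau>Ypos: "0 < \<tau>Y" using \<tau>Yr tpos by (cases "\<tau>Y = 0") auto
      have lowX: "- 0 \<le> X \<tau>X"
      proof (rule tau_lower[OF cX gX \<tau>Xpos _ \<tau>Xr(3)])
        show "\<And>s. 0 \<le> s \<Longrightarrow> s < \<tau>X \<Longrightarrow> occ X s < t" using TX(5) unfolding \<tau>X_def by blast
      qed simp
      have lowY: "- \<delta> \<le> X \<tau>Y"
      proof (rule tau_lower[OF cX gY \<tau>Ypos _ \<tau>Yr(3)])
        show "\<And>s. 0 \<le> s \<Longrightarrow> s < \<tau>Y \<Longrightarrow> occ Y s < t" using TY(5) unfolding \<tau>Y_def by blast
        fix u assume u: "0 \<le> u" "u \<le> \<tau>Y" "X u < - \<delta>"
        then have "\<bar>X u - Y u\<bar> < \<delta>" using close[of u] \<tau>Yr by auto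
        then show "Y u < 0" using u by linarith
      qed
      have cY: "\<bar>X \<tau>Y - Y \<tau>Y\<bar> < \<delta>" using close[of \<tau>Y] \<tau>Yr by auto
      show ?thesis
      proof (cases "q - p < r")
        case True
        then have "\<bar>\<tau>Y - \<tau>X\<bar> < r" using Yq pY Xq pX by auto
        then have "\<bar>X \<tau>Y - X \<tau>X\<bar> < \<epsilon>/2" using r(2) \<tau>Xr \<tau>Yr by auto
        then show ?thesis using gXt gYt cY \<delta> by linarith
      next
        case False
        have up: "X u < \<epsilon>/2" if u: "p \<le> u" "u \<le> q" for u
        proof (rule ccontr)
          assume "\<not> X u < \<epsilon>/2"
          then have Xu: "\<epsilon>/2 \<le> X u" by simp
          obtain c d where cd: "p \<le> c" "c \<le> d" "d \<le> q" "d - c = r/2" "c \<le> u" "u \<le> d"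
          proof (cases "r/2 \<le> u - p")
            case True then show ?thesis using that[of "u - r/2" u] u r(1) by auto
          next
            case False then show ?thesis using that[of u "u + r/2"] u r(1) \<open>\<not> q - p < r\<close> by auto
          qed
          have pos: "\<forall>v\<in>{c..d}. X v \<ge> 0"
          proof
            fix v assume v: "v \<in> {c..d}"
            then have "\<bar>v - u\<bar> < r" using cd r(1) by auto
            moreover have "v \<in> {0..S0}" "u \<in> {0..S0}" using v cd pr qr u by auto
            ultimately have "\<bar>X v - X u\<bar> < \<epsilon>/2" using r(2) by blast
            then show "X v \<ge> 0" using Xu by linarith
          qed
          have "integral {c..d} (indf X) = r/2" using int_one[OF pos cd(2)] cd(4) by simp
          moreover have "integral {c..d} (indf X) \<le> occ X q - occ X p"
            by (rule occ_sub[OF gX pr(1) cd(1-3)])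
          ultimately show False using gap \<eta> r(1) by linarith
        qed
        have "X \<tau>X < \<epsilon>/2" "X \<tau>Y < \<epsilon>/2" using up pX Xq pY Yq by auto
        then show ?thesis using gXt gYt cY lowX lowY \<delta> by auto
      qed
    qed
  qed
qed

lemma id_Lambda: "(\<lambda>x. x) \<in> Lambda T"
  unfolding Lambda_def by (auto intro: continuous_on_id strict_mono_onI bij_betw_id simp: bij_betw_def)

lemma skor_d_nonneg: "0 \<le> T \<Longrightarrow> 0 \<le> skor_d T X Y"
  unfolding skor_d_def
proof (rule INF_greatest)
  fix l :: "real \<Rightarrow> real" assume "0 \<le> T"
  have "ereal 0 \<le> ereal \<bar>0 - l 0\<bar>" by simp
  also have "\<dots> \<le> (SUP t\<in>{0..T}. ereal \<bar>t - l t\<bar>)" by (rule SUP_upper) (use \<open>0 \<le> T\<close> in simp)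
  finally have "0 \<le> (SUP t\<in>{0..T}. ereal \<bar>t - l t\<bar>)" by (simp add: zero_ereal_def)
  then show "0 \<le> max (SUP t\<in>{0..T}. ereal \<bar>t - l t\<bar>) (SUP t\<in>{0..T}. ereal \<bar>X t - Y (l t)\<bar>)"
    by (rule max.coboundedI1)
qed

definition sterm :: "(real \<Rightarrow> real) \<Rightarrow> (real \<Rightarrow> real) \<Rightarrow> nat \<Rightarrow> real" where
  "sterm X Y n = (1/2)^(Suc n) * real_of_ereal (min 1 (skor_d (real (Suc n)) (psi (real (Suc n)) X) (psi (real (Suc n)) Y)))"

lemma skor_dinf_sterm: "skor_dinf X Y = suminf (sterm X Y)"
  unfolding skor_dinf_def sterm_def by simp

lemma rmin_bounds:
  assumes "0 \<le> (x::ereal)"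
  shows "0 \<le> real_of_ereal (min 1 x)" "real_of_ereal (min 1 x) \<le> 1"
proof -
  have "0 \<le> real_of_ereal (min 1 x) \<and> real_of_ereal (min 1 x) \<le> 1"
  proof (cases x)
    case (real r)
    then have "0 \<le> r" using assms by simp
    then show ?thesis using real by (cases "r \<le> 1") (auto simp: min_def)
  next
    case PInf then show ?thesis by simp
  next
    case MInf then show ?thesis using assms by simp
  qed
  then show "0 \<le> real_of_ereal (min 1 x)" "real_of_ereal (min 1 x) \<le> 1" by auto
qed

lemma sterm_bounds: "0 \<le> sterm X Y n" "sterm X Y n \<le> (1/2)^(Suc n)"
proof -
  have d: "0 \<le> skor_d (real (Suc n)) (psi (real (Suc n)) X) (psi (real (Suc n)) Y)"
    by (rule skor_d_nonneg) simp
  show "0 \<le> sterm X Y n" unfolding sterm_def using rmin_bounds(1)[OF d] by simp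
  show "sterm X Y n \<le> (1/2)^(Suc n)" unfolding sterm_def using rmin_bounds[OF d]
    by (simp add: mult_left_le)
qed

lemma sterm_summable: "summable (sterm X Y)"
  by (rule summable_comparison_test[OF _ sums_summable[OF power_half_series]])
     (use sterm_bounds in auto)

lemma sterm_le_sum: "sterm X Y n \<le> skor_dinf X Y"
proof -
  have "sterm X Y n \<le> sum (sterm X Y) {n}" by simp
  also have "\<dots> \<le> suminf (sterm X Y)"
    by (rule sum_le_suminf[OF sterm_summable]) (auto simp: sterm_bounds)
  finally show ?thesis by (simp add: skor_dinf_sterm)
qed

lemma cutoff_bounds: "0 \<le> t \<Longrightarrow> t \<le> m \<Longrightarrow> 0 \<le> cutoff m t \<and> cutoff m t \<le> 2"
  unfolding cutoff_def by auto

lemma cutoff_one: "t < m - 1 \<Longrightarrow> cutoff m t = 1"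
  unfolding cutoff_def by auto

lemma D2:
  fixes X :: "real \<Rightarrow> real"
  assumes cX: "continuous_on {0..} X" and e: "0 < \<epsilon>" and S: "0 \<le> S"
  shows "\<exists>d>0. \<forall>Y. skor_dinf X Y < d \<longrightarrow> (\<forall>s\<in>{0..S}. \<bar>X s - Y s\<bar> < \<epsilon>)"
proof -
  define n where "n = nat \<lceil>S\<rceil> + 1"
  define T where "T = real (Suc n)"
  have ST: "S + 2 \<le> T" unfolding T_def n_def using S by linarith
  have e2: "0 < \<epsilon>/2" using e by simp
  obtain \<rho> where \<rho>: "\<rho> > 0" "\<forall>u\<in>{0..T}. \<forall>v\<in>{0..T}. \<bar>u - v\<bar> < \<rho> \<longrightarrow> \<bar>X u - X v\<bar> < \<epsilon>/2"
    using unif_cont[OF cX e2] by blast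
  define \<delta> where "\<delta> = min (min \<rho> (\<epsilon>/2)) (1/2)"
  have \<delta>: "0 < \<delta>" "\<delta> \<le> \<rho>" "\<delta> \<le> \<epsilon>/2" "\<delta> \<le> 1/2" using \<rho> e unfolding \<delta>_def by auto
  define d where "d = (1/2)^(Suc n) * \<delta>"
  have "d > 0" unfolding d_def using \<delta> by simp
  show ?thesis
  proof (intro exI[of _ d] conjI allI impI ballI)
    show "0 < d" by fact
    fix Y s assume dY: "skor_dinf X Y < d" and s: "s \<in> {0..S}"
    let ?D = "skor_d T (psi T X) (psi T Y)"
    have D0: "0 \<le> ?D" by (rule skor_d_nonneg) (simp add: T_def)
    have "sterm X Y n < d" using sterm_le_sum[of X Y n] dY by simp
    then have "(1/2)^(Suc n) * real_of_ereal (min 1 ?D) < (1/2)^(Suc n) * \<delta>"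
      unfolding sterm_def d_def T_def by simp
    then have rl: "real_of_ereal (min 1 ?D) < \<delta>" by (simp add: mult_less_cancel_left)
    have "?D < ereal \<delta>"
    proof (cases "?D < 1")
      case True
      then obtain r where r: "?D = ereal r" using D0 by (cases ?D) auto
      then have "r < 1" using True by simp
      then have "min 1 ?D = ereal r" using r by simp
      then show ?thesis using rl r by simp
    next
      case False
      then have "min 1 ?D = 1" by simp
      then show ?thesis using rl \<delta> by simp
    qed
    then obtain l where l: "l \<in> Lambda T"
      "max (SUP t\<in>{0..T}. ereal \<bar>t - l t\<bar>) (SUP t\<in>{0..T}. ereal \<bar>psi T X t - psi T Y (l t)\<bar>) < ereal \<delta>"
      unfolding skor_d_def INF_less_iff by blast
    have l1: "\<bar>t - l t\<bar> < \<delta>" if "t \<in> {0..T}" for t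
    proof -
      have "ereal \<bar>t - l t\<bar> \<le> (SUP t\<in>{0..T}. ereal \<bar>t - l t\<bar>)" by (rule SUP_upper) fact
      moreover have "(SUP t\<in>{0..T}. ereal \<bar>t - l t\<bar>) < ereal \<delta>" using l(2) by (simp add: max_less_iff_conj)
      ultimately have "ereal \<bar>t - l t\<bar> < ereal \<delta>" by (rule le_less_trans)
      then show ?thesis by simp
    qed
    have l2: "\<bar>psi T X t - psi T Y (l t)\<bar> < \<delta>" if "t \<in> {0..T}" for t
    proof -
      have "ereal \<bar>psi T X t - psi T Y (l t)\<bar> \<le> (SUP t\<in>{0..T}. ereal \<bar>psi T X t - psi T Y (l t)\<bar>)"
        by (rule SUP_upper) fact
      moreover have "(SUP t\<in>{0..T}. ereal \<bar>psi T X t - psi T Y (l t)\<bar>) < ereal \<delta>" using l(2) by (simp add: max_less_iff_conj)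
      ultimately have "ereal \<bar>psi T X t - psi T Y (l t)\<bar> < ereal \<delta>" by (rule le_less_trans)
      then show ?thesis by simp
    qed
    have sT: "s \<in> {0..T}" using s ST by auto
    have "bij_betw l {0..T} {0..T}" using l(1) unfolding Lambda_def by simp
    then have "s \<in> l ` {0..T}" using sT by (simp add: bij_betw_def)
    then obtain t where t: "t \<in> {0..T}" "l t = s" by blast
    have ts: "\<bar>t - s\<bar> < \<delta>" using l1[OF t(1)] t(2) by simp
    have "t < T - 1" using ts s ST \<delta> by auto
    then have "psi T X t = X t" unfolding psi_def by (simp add: cutoff_one)
    moreover have "psi T Y s = Y s" using s ST unfolding psi_def by (simp add: cutoff_one)
    ultimately have "\<bar>X t - Y s\<bar> < \<delta>" using l2[OF t(1)] t(2) by simp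
    moreover have "\<bar>X s - X t\<bar> < \<epsilon>/2" using \<rho>(2) sT t(1) ts \<delta> by auto
    ultimately show "\<bar>X s - Y s\<bar> < \<epsilon>" using \<delta> by linarith
  qed
qed

lemma D4:
  fixes F G :: "real \<Rightarrow> real" and c :: real and N :: nat
  assumes c: "0 \<le> c" and FG: "\<forall>t\<in>{0..real N}. \<bar>F t - G t\<bar> \<le> c"
  shows "skor_dinf F G \<le> 2 * c + (1/2)^N"
proof -
  have small: "sterm F G k \<le> (1/2)^(Suc k) * (2 * c)" if k: "k < N" for k
  proof -
    define T where "T = real (Suc k)"
    let ?D = "skor_d T (psi T F) (psi T G)"
    have "?D \<le> max (SUP t\<in>{0..T}. ereal \<bar>t - t\<bar>) (SUP t\<in>{0..T}. ereal \<bar>psi T F t - psi T G t\<bar>)"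
      unfolding skor_d_def by (rule INF_lower[OF id_Lambda])
    also have "\<dots> \<le> ereal (2 * c)"
    proof (rule max.boundedI)
      show "(SUP t\<in>{0..T}. ereal \<bar>t - t\<bar>) \<le> ereal (2 * c)"
        by (rule SUP_least) (use c in simp)
      show "(SUP t\<in>{0..T}. ereal \<bar>psi T F t - psi T G t\<bar>) \<le> ereal (2 * c)"
      proof (rule SUP_least)
        fix t assume t: "t \<in> {0..T}"
        then have "t \<in> {0..real N}" using k unfolding T_def by auto
        then have a: "\<bar>F t - G t\<bar> \<le> c" using FG by blast
        have b: "0 \<le> cutoff T t \<and> cutoff T t \<le> 2" using t cutoff_bounds by auto
        have "psi T F t - psi T G t = (F t - G t) * cutoff T t"
          unfolding psi_def by (simp add: algebra_simps)
        then have "\<bar>psi T F t - psi T G t\<bar> = \<bar>F t - G t\<bar> * cutoff T t"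
          using b by (simp add: abs_mult)
        also have "\<dots> \<le> c * 2" using a b by (intro mult_mono) auto
        finally show "ereal \<bar>psi T F t - psi T G t\<bar> \<le> ereal (2 * c)" by simp
      qed
    qed
    finally have D: "?D \<le> ereal (2 * c)" .
    have D0: "0 \<le> ?D" by (rule skor_d_nonneg) (simp add: T_def)
    have "real_of_ereal (min 1 ?D) \<le> 2 * c"
    proof -
      obtain r where r: "?D = ereal r" using D D0 by (cases ?D) auto
      then have "r \<le> 2 * c" "0 \<le> r" using D D0 by auto
      then show ?thesis using r by (cases "r \<le> 1") (auto simp: min_def)
    qed
    then show ?thesis unfolding sterm_def T_def[symmetric] by (simp add: mult_left_mono)
  qed
  have sm: "summable (sterm F G)" by (rule sterm_summable)
  have "skor_dinf F G = (\<Sum>k. sterm F G (k + N)) + (\<Sum>k<N. sterm F G k)"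
    unfolding skor_dinf_sterm by (rule suminf_split_initial_segment[OF sm])
  also have "(\<Sum>k. sterm F G (k + N)) \<le> (\<Sum>k. (1/2)^N * (1/2)^(Suc k))"
  proof (rule suminf_le)
    fix k show "sterm F G (k + N) \<le> (1/2)^N * (1/2)^(Suc k)"
      using sterm_bounds(2)[of F G "k + N"] by (simp add: power_add mult_ac)
    show "summable (\<lambda>k. sterm F G (k + N))" using sm by (simp add: summable_iff_shift)
    show "summable (\<lambda>k. (1/2::real)^N * (1/2)^(Suc k))"
      by (rule summable_mult[OF sums_summable[OF power_half_series]])
  qed
  also have "(\<Sum>k. (1/2::real)^N * (1/2)^(Suc k)) = (1/2)^N"
    using sums_unique[OF sums_mult[OF power_half_series, of "(1/2)^N"]] by simp
  also have "(\<Sum>k<N. sterm F G k) \<le> (\<Sum>k<N. (1/2)^(Suc k) * (2 * c))"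
    by (rule sum_mono) (rule small, simp)
  also have "\<dots> = (\<Sum>k<N. (1/2::real)^(Suc k)) * (2 * c)" by (simp add: sum_distrib_right)
  also have "\<dots> \<le> 1 * (2 * c)"
  proof (rule mult_right_mono[OF _ ]) 
    have "(\<Sum>k<N. (1/2::real)^(Suc k)) \<le> (\<Sum>k. (1/2::real)^(Suc k))"
      by (rule sum_le_suminf[OF sums_summable[OF power_half_series]]) auto
    then show "(\<Sum>k<N. (1/2::real)^(Suc k)) \<le> 1" using sums_unique[OF power_half_series] by simp
    show "0 \<le> 2 * c" using c by simp
  qed
  finally show ?thesis by simp
qed

lemma cadlag_meas:
  fixes Y :: "real \<Rightarrow> real"
  assumes "cadlag Y"
  shows "(\<lambda>u. Y (max 0 u)) \<in> borel_measurable borel"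
proof -
  have j: "(\<lambda>p. (\<lambda>(x::unit). Y) (fst p) (max 0 (snd p))) \<in> borel_measurable (count_space UNIV \<Otimes>\<^sub>M (lborel :: real measure))"
    by (rule joint_meas) (use assms in \<open>auto simp: cadlag_def\<close>)
  have p: "(\<lambda>u::real. ((), u)) \<in> borel \<rightarrow>\<^sub>M (count_space UNIV \<Otimes>\<^sub>M (lborel :: real measure))"
    by (rule measurable_Pair) (auto simp: measurable_lborel2)
  have "(\<lambda>u. (\<lambda>p. (\<lambda>(x::unit). Y) (fst p) (max 0 (snd p))) ((), u)) \<in> borel_measurable borel"
    by (rule measurable_compose[OF p j])
  then show ?thesis by simp
qed

lemma det_main:
  fixes X :: "real \<Rightarrow> real"
  assumes cX: "continuous_on {0..} X" and th: "thin X" and unb: "\<forall>c. \<exists>s\<ge>0. c \<le> occ X s"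
  shows "X \<notin> Dg"
proof -
  have "\<forall>e>0. \<exists>d>0. \<forall>Y. cadlag Y \<and> skor_dinf X Y < d \<longrightarrow> skor_dinf (gmap X) (gmap Y) < e"
  proof (intro allI impI)
    fix e :: real assume e: "0 < e"
    obtain N :: nat where N: "(1/2::real)^N < e/2" using real_arch_pow_inv[of "e/2" "1/2::real"] e by auto
    have e4: "0 < e/4" using e by simp
    obtain S \<delta> where S\<delta>: "0 \<le> S" "0 < \<delta>"
      "\<And>Y. good Y \<Longrightarrow> (\<forall>s\<in>{0..S}. \<bar>X s - Y s\<bar> < \<delta>) \<Longrightarrow> (\<forall>t\<in>{0..real N}. \<bar>gmap X t - gmap Y t\<bar> < e/4)"
      using D3[OF cX th unb e4, of "real N"] by blast
    obtain d where d: "0 < d" "\<And>Y. skor_dinf X Y < d \<Longrightarrow> (\<forall>s\<in>{0..S}. \<bar>X s - Y s\<bar> < \<delta>)"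
      using D2[OF cX S\<delta>(2) S\<delta>(1)] by blast
    show "\<exists>d>0. \<forall>Y. cadlag Y \<and> skor_dinf X Y < d \<longrightarrow> skor_dinf (gmap X) (gmap Y) < e"
    proof (intro exI[of _ d] conjI allI impI)
      show "0 < d" by fact
      fix Y assume Y: "cadlag Y \<and> skor_dinf X Y < d"
      have gY: "good Y" by (rule good_meas[OF cadlag_meas]) (use Y in simp)
      have "\<forall>t\<in>{0..real N}. \<bar>gmap X t - gmap Y t\<bar> < e/4" using S\<delta>(3)[OF gY d(2)] Y by simp
      then have "\<forall>t\<in>{0..real N}. \<bar>gmap X t - gmap Y t\<bar> \<le> e/4" by (simp add: less_imp_le)
      then have "skor_dinf (gmap X) (gmap Y) \<le> 2 * (e/4) + (1/2)^N" by (intro D4) (use e in auto)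
      then show "skor_dinf (gmap X) (gmap Y) < e" using N by simp
    qed
  qed
  then show ?thesis unfolding Dg_def by blast
qed

context prob_space
begin

lemma nd_meas:
  assumes D: "distributed M lborel X (\<lambda>x. ennreal (normal_density 0 \<sigma> x))"
  shows "X \<in> borel_measurable M"
  using distributed_measurable[OF D] by (simp add: measurable_lborel2)

lemma nd_emeasure:
  assumes D: "distributed M lborel X (\<lambda>x. ennreal (normal_density 0 \<sigma> x))" and A: "A \<in> sets borel"
  shows "emeasure M {\<omega>\<in>space M. X \<omega> \<in> A} = (\<integral>\<^sup>+x. ennreal (normal_density 0 \<sigma> x) * indicator A x \<partial>lborel)"
proof -
  have "{\<omega>\<in>space M. X \<omega> \<in> A} = X -` A \<inter> space M" by auto
  then show ?thesis using distributed_emeasure[OF D, of A] A by simp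
qed

lemma nd_zero:
  assumes D: "distributed M lborel X (\<lambda>x. ennreal (normal_density 0 \<sigma> x))"
  shows "prob {\<omega>\<in>space M. X \<omega> = 0} = 0"
proof -
  have "emeasure M {\<omega>\<in>space M. X \<omega> \<in> {0}} = (\<integral>\<^sup>+x. ennreal (normal_density 0 \<sigma> x) * indicator {0} x \<partial>lborel)"
    by (rule nd_emeasure[OF D]) simp
  also have "\<dots> = 0" by simp
  finally show ?thesis by (simp add: measure_def)
qed

lemma nd_half:
  assumes D: "distributed M lborel X (\<lambda>x. ennreal (normal_density 0 \<sigma> x))" and s: "0 < \<sigma>"
  shows "prob {\<omega>\<in>space M. 0 \<le> X \<omega>} = 1/2"
proof -
  have D': "distributed M lborel (\<lambda>x. 0 + -1 * X x) (\<lambda>x. ennreal (normal_density (0 + -1 * 0) (\<bar>-1\<bar> * \<sigma>) x))"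
    by (rule normal_density_affine[OF D s]) simp
  then have D2: "distributed M lborel (\<lambda>x. - X x) (\<lambda>x. ennreal (normal_density 0 \<sigma> x))" by simp
  have "emeasure M {\<omega>\<in>space M. X \<omega> \<in> {0..}} = emeasure M {\<omega>\<in>space M. - X \<omega> \<in> {0..}}"
    using nd_emeasure[OF D, of "{0..}"] nd_emeasure[OF D2, of "{0..}"] by simp
  then have e: "prob {\<omega>\<in>space M. 0 \<le> X \<omega>} = prob {\<omega>\<in>space M. X \<omega> \<le> 0}"
    by (simp add: measure_def)
  have m: "X \<in> borel_measurable M" by (rule nd_meas[OF D])
  have "prob {\<omega>\<in>space M. X \<omega> \<le> 0} = prob {\<omega>\<in>space M. X \<omega> < 0} + prob {\<omega>\<in>space M. X \<omega> = 0}"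
  proof -
    have "{\<omega>\<in>space M. X \<omega> \<le> 0} = {\<omega>\<in>space M. X \<omega> < 0} \<union> {\<omega>\<in>space M. X \<omega> = 0}" by auto
    moreover have "{\<omega>\<in>space M. X \<omega> < 0} \<inter> {\<omega>\<in>space M. X \<omega> = 0} = {}" by auto
    ultimately show ?thesis using m by (simp add: finite_measure_Union)
  qed
  then have a: "prob {\<omega>\<in>space M. X \<omega> \<le> 0} = prob {\<omega>\<in>space M. X \<omega> < 0}" using nd_zero[OF D] by simp
  have "prob {\<omega>\<in>space M. X \<omega> < 0} + prob {\<omega>\<in>space M. 0 \<le> X \<omega>} = 1"
  proof -
    have "{\<omega>\<in>space M. X \<omega> < 0} \<union> {\<omega>\<in>space M. 0 \<le> X \<omega>} = space M" by auto
    moreover have "{\<omega>\<in>space M. X \<omega> < 0} \<inter> {\<omega>\<in>space M. 0 \<le> X \<omega>} = {}" by auto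
    ultimately show ?thesis using m finite_measure_Union[of "{\<omega>\<in>space M. X \<omega> < 0}" "{\<omega>\<in>space M. 0 \<le> X \<omega>}"]
      by (simp add: prob_space)
  qed
  then show ?thesis using e a by simp
qed

lemma nd_le: "0 < \<sigma> \<Longrightarrow> normal_density 0 \<sigma> x \<le> 1 / \<sigma>"
proof -
  assume s: "0 < \<sigma>"
  have "exp (-(x - 0)\<^sup>2 / (2 * \<sigma>\<^sup>2)) \<le> 1" by simp
  moreover have "\<sigma> \<le> sqrt (2 * pi * \<sigma>\<^sup>2)"
  proof -
    have "sqrt (2 * pi * \<sigma>\<^sup>2) = sqrt (2 * pi) * \<sigma>" using s by (simp add: real_sqrt_mult)
    moreover have "1 \<le> sqrt (2 * pi)" using pi_gt3 by simp
    ultimately show ?thesis using s by simp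
  qed
  ultimately have "1 / sqrt (2 * pi * \<sigma>\<^sup>2) * exp (-(x - 0)\<^sup>2 / (2 * \<sigma>\<^sup>2)) \<le> 1 / \<sigma> * 1"
    using s by (intro mult_mono) (auto intro: divide_left_mono)
  then show ?thesis unfolding normal_density_def by simp
qed

lemma nd_interval:
  assumes D: "distributed M lborel X (\<lambda>x. ennreal (normal_density 0 \<sigma> x))" and s: "0 < \<sigma>" and a: "0 \<le> a"
  shows "prob {\<omega>\<in>space M. - a \<le> X \<omega> \<and> X \<omega> < 0} \<le> a / \<sigma>"
proof -
  have "emeasure M {\<omega>\<in>space M. X \<omega> \<in> {-a..<0}} = (\<integral>\<^sup>+x. ennreal (normal_density 0 \<sigma> x) * indicator {-a..<0} x \<partial>lborel)"
    by (rule nd_emeasure[OF D]) simp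
  also have "\<dots> \<le> (\<integral>\<^sup>+x. ennreal (1/\<sigma>) * indicator {-a..<0} x \<partial>lborel)"
    by (intro nn_integral_mono mult_right_mono) (auto intro: ennreal_leI nd_le[OF s])
  also have "\<dots> = ennreal (1/\<sigma>) * emeasure lborel {-a..<0}"
    by (simp add: nn_integral_cmult_indicator)
  also have "\<dots> = ennreal (a / \<sigma>)" using a s by (simp add: ennreal_mult[symmetric])
  finally have "emeasure M {\<omega>\<in>space M. X \<omega> \<in> {-a..<0}} \<le> ennreal (a / \<sigma>)" .
  then have "prob {\<omega>\<in>space M. X \<omega> \<in> {-a..<0}} \<le> a / \<sigma>"
    using a s by (simp add: measure_def enn2real_leI)
  moreover have "{\<omega>\<in>space M. X \<omega> \<in> {-a..<0}} = {\<omega>\<in>space M. - a \<le> X \<omega> \<and> X \<omega> < 0}" by auto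
  ultimately show ?thesis by simp
qed

lemma nd_tail:
  assumes D: "distributed M lborel X (\<lambda>x. ennreal (normal_density 0 \<sigma> x))" and s: "0 < \<sigma>" and a: "0 < a"
  shows "prob {\<omega>\<in>space M. a < X \<omega>} \<le> \<sigma>\<^sup>2 / a\<^sup>2"
proof -
  have m: "X \<in> borel_measurable M" by (rule nd_meas[OF D])
  have "integrable lborel (\<lambda>x. normal_density 0 \<sigma> x * (x - 0)^2)" by (rule integrable_normal_moment) (use s in simp)
  then have i2: "integrable M (\<lambda>x. X x ^ 2)"
    using distributed_integrable[OF D, of "\<lambda>x. x^2"] by simp
  have ex: "expectation X = 0" by (rule normal_distributed_expectation[OF s D])
  have var: "variance X = \<sigma>\<^sup>2" by (rule normal_distributed_variance[OF s D])
  have "prob {x\<in>space M. \<bar>X x - expectation X\<bar> \<ge> a} \<le> variance X / a\<^sup>2"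
    by (rule Chebyshev_inequality[OF m i2 a])
  then have c: "prob {x\<in>space M. \<bar>X x\<bar> \<ge> a} \<le> \<sigma>\<^sup>2 / a\<^sup>2" using ex var by simp
  have "prob {\<omega>\<in>space M. a < X \<omega>} \<le> prob {x\<in>space M. \<bar>X x\<bar> \<ge> a}"
    by (rule finite_measure_mono) (use m in auto)
  then show ?thesis using c by simp
qed

end

lemma bm_ps: "std_brownian_motion M B \<Longrightarrow> prob_space M"
  unfolding std_brownian_motion_def by simp

lemma bm_inc:
  "std_brownian_motion M B \<Longrightarrow> 0 \<le> s \<Longrightarrow> s < t \<Longrightarrow>
   distributed M lborel (\<lambda>\<omega>. B \<omega> t - B \<omega> s) (\<lambda>x. ennreal (normal_density 0 (sqrt (t - s)) x))"
  unfolding std_brownian_motion_def by blast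

lemma bm_meas: "std_brownian_motion M B \<Longrightarrow> 0 \<le> t \<Longrightarrow> (\<lambda>\<omega>. B \<omega> t) \<in> borel_measurable M"
  unfolding std_brownian_motion_def by blast

lemma bm_zero0: "std_brownian_motion M B \<Longrightarrow> \<omega> \<in> space M \<Longrightarrow> B \<omega> 0 = 0"
  unfolding std_brownian_motion_def by blast

lemma bm_cont: "std_brownian_motion M B \<Longrightarrow> \<omega> \<in> space M \<Longrightarrow> continuous_on {0..} (B \<omega>)"
  unfolding std_brownian_motion_def by blast

lemma bm_dist0:
  assumes bm: "std_brownian_motion M B" and u: "0 < u"
  shows "distributed M lborel (\<lambda>\<omega>. B \<omega> u) (\<lambda>x. ennreal (normal_density 0 (sqrt u) x))"
proof -
  have D: "distributed M lborel (\<lambda>\<omega>. B \<omega> u - B \<omega> 0) (\<lambda>x. ennreal (normal_density 0 (sqrt (u - 0)) x))"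
    by (rule bm_inc[OF bm order_refl u])
  have eq: "\<And>\<omega>. \<omega> \<in> space M \<Longrightarrow> B \<omega> u - B \<omega> 0 = B \<omega> u" using bm_zero0[OF bm] by simp
  have "distr M lborel (\<lambda>\<omega>. B \<omega> u) = distr M lborel (\<lambda>\<omega>. B \<omega> u - B \<omega> 0)"
    by (rule distr_cong) (use eq in auto)
  moreover have "(\<lambda>\<omega>. B \<omega> u) \<in> measurable M lborel"
    using bm_meas[OF bm, of u] u by (simp add: measurable_lborel2)
  ultimately show ?thesis using D unfolding distributed_def by simp
qed

lemma bm_half:
  assumes bm: "std_brownian_motion M B" and u: "0 < u"
  shows "measure M {\<omega>\<in>space M. 0 \<le> B \<omega> u} = 1/2"
proof -
  interpret prob_space M by (rule bm_ps[OF bm])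
  show ?thesis by (rule nd_half[OF bm_dist0[OF bm u]]) (use u in simp)
qed

lemma bm_nonzero:
  assumes bm: "std_brownian_motion M B" and u: "0 < u"
  shows "measure M {\<omega>\<in>space M. B \<omega> u = 0} = 0"
proof -
  interpret prob_space M by (rule bm_ps[OF bm])
  show ?thesis by (rule nd_zero[OF bm_dist0[OF bm u]])
qed

lemma bm_indep:
  assumes bm: "std_brownian_motion M B" and uv: "0 < u" "u < v" and A: "A \<in> sets borel" and C: "C \<in> sets borel"
  shows "measure M {\<omega>\<in>space M. B \<omega> u \<in> A \<and> B \<omega> v - B \<omega> u \<in> C}
       = measure M {\<omega>\<in>space M. B \<omega> u \<in> A} * measure M {\<omega>\<in>space M. B \<omega> v - B \<omega> u \<in> C}"
proof -
  interpret prob_space M by (rule bm_ps[OF bm])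
  define ts :: "nat \<Rightarrow> real" where "ts = (\<lambda>i. if i = 0 then 0 else if i = 1 then u else v)"
  have "ts 0 \<ge> 0 \<and> (\<forall>i<2. ts i < ts (Suc i))" using uv unfolding ts_def by (auto simp: less_Suc_eq)
  then have ind: "indep_vars (\<lambda>_. borel) (\<lambda>i \<omega>. B \<omega> (ts (Suc i)) - B \<omega> (ts i)) {..<2}"
    using bm unfolding std_brownian_motion_def by blast
  define A' where "A' = (\<lambda>i::nat. if i = 0 then A else C)"
  have "prob (\<Inter>i\<in>{..<2}. (\<lambda>\<omega>. B \<omega> (ts (Suc i)) - B \<omega> (ts i)) -` A' i \<inter> space M)
      = (\<Prod>i\<in>{..<2}. prob ((\<lambda>\<omega>. B \<omega> (ts (Suc i)) - B \<omega> (ts i)) -` A' i \<inter> space M))"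
    by (rule indep_varsD_finite[OF ind]) (auto simp: A'_def A C lessThan_empty_iff)
  moreover have "{..<2::nat} = {0, 1}" by auto
  ultimately have e: "prob (((\<lambda>\<omega>. B \<omega> u - B \<omega> 0) -` A \<inter> space M) \<inter> ((\<lambda>\<omega>. B \<omega> v - B \<omega> u) -` C \<inter> space M))
      = prob ((\<lambda>\<omega>. B \<omega> u - B \<omega> 0) -` A \<inter> space M) * prob ((\<lambda>\<omega>. B \<omega> v - B \<omega> u) -` C \<inter> space M)"
    by (simp add: ts_def A'_def)
  have z: "\<And>\<omega>. \<omega> \<in> space M \<Longrightarrow> B \<omega> 0 = 0" using bm_zero0[OF bm] by simp
  have s1: "((\<lambda>\<omega>. B \<omega> u - B \<omega> 0) -` A \<inter> space M) \<inter> ((\<lambda>\<omega>. B \<omega> v - B \<omega> u) -` C \<inter> space M)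
     = {\<omega>\<in>space M. B \<omega> u \<in> A \<and> B \<omega> v - B \<omega> u \<in> C}" using z by auto
  have s2: "(\<lambda>\<omega>. B \<omega> u - B \<omega> 0) -` A \<inter> space M = {\<omega>\<in>space M. B \<omega> u \<in> A}" using z by auto
  have s3: "(\<lambda>\<omega>. B \<omega> v - B \<omega> u) -` C \<inter> space M = {\<omega>\<in>space M. B \<omega> v - B \<omega> u \<in> C}" by auto
  have s1': "{\<omega>\<in>space M. B \<omega> u \<in> A} \<inter> {\<omega>\<in>space M. B \<omega> v - B \<omega> u \<in> C}
     = {\<omega>\<in>space M. B \<omega> u \<in> A \<and> B \<omega> v - B \<omega> u \<in> C}" by auto
  show ?thesis using e unfolding s2 s3 s1' .
qed

lemma aux_lin: "0 \<le> (X::real) \<Longrightarrow> P \<le> 1/2 * (1/2 + X) + Y \<Longrightarrow> P \<le> 1/4 + X + Y"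
  by (simp add: algebra_simps)

lemma bm_pair:
  assumes bm: "std_brownian_motion M B" and uv: "0 < u" "u < v" and a: "0 < a"
  shows "measure M {\<omega>\<in>space M. 0 \<le> B \<omega> u \<and> 0 \<le> B \<omega> v} \<le> 1/4 + a / sqrt (v - u) + u / a\<^sup>2"
proof -
  interpret prob_space M by (rule bm_ps[OF bm])
  have Du: "distributed M lborel (\<lambda>\<omega>. B \<omega> u) (\<lambda>x. ennreal (normal_density 0 (sqrt u) x))"
    by (rule bm_dist0[OF bm uv(1)])
  have DD: "distributed M lborel (\<lambda>\<omega>. B \<omega> v - B \<omega> u) (\<lambda>x. ennreal (normal_density 0 (sqrt (v - u)) x))"
    by (rule bm_inc[OF bm _ uv(2)]) (use uv in simp)
  have mu: "(\<lambda>\<omega>. B \<omega> u) \<in> borel_measurable M" by (rule nd_meas[OF Du])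
  have mD: "(\<lambda>\<omega>. B \<omega> v - B \<omega> u) \<in> borel_measurable M" by (rule nd_meas[OF DD])
  have sv: "0 < sqrt (v - u)" using uv by simp
  note [measurable] = mu mD
  have "{\<omega>\<in>space M. 0 \<le> B \<omega> u \<and> 0 \<le> B \<omega> v} \<subseteq>
        {\<omega>\<in>space M. B \<omega> u \<in> {0..} \<and> B \<omega> v - B \<omega> u \<in> {-a..}} \<union> {\<omega>\<in>space M. a < B \<omega> u}"
    by auto
  then have "prob {\<omega>\<in>space M. 0 \<le> B \<omega> u \<and> 0 \<le> B \<omega> v} \<le>
        prob ({\<omega>\<in>space M. B \<omega> u \<in> {0..} \<and> B \<omega> v - B \<omega> u \<in> {-a..}} \<union> {\<omega>\<in>space M. a < B \<omega> u})"
    by (rule finite_measure_mono) measurable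
  also have "\<dots> \<le> prob {\<omega>\<in>space M. B \<omega> u \<in> {0..} \<and> B \<omega> v - B \<omega> u \<in> {-a..}} + prob {\<omega>\<in>space M. a < B \<omega> u}"
    by (intro measure_subadditive emeasure_finite; measurable)
  also have "prob {\<omega>\<in>space M. B \<omega> u \<in> {0..} \<and> B \<omega> v - B \<omega> u \<in> {-a..}}
      = prob {\<omega>\<in>space M. B \<omega> u \<in> {0..}} * prob {\<omega>\<in>space M. B \<omega> v - B \<omega> u \<in> {-a..}}"
    by (rule bm_indep[OF bm uv]) auto
  also have "prob {\<omega>\<in>space M. B \<omega> u \<in> {0..}} = 1/2" using bm_half[OF bm uv(1)] by simp
  also have "prob {\<omega>\<in>space M. B \<omega> v - B \<omega> u \<in> {-a..}} \<le> 1/2 + a / sqrt (v - u)"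
  proof -
    have "{\<omega>\<in>space M. B \<omega> v - B \<omega> u \<in> {-a..}} =
          {\<omega>\<in>space M. 0 \<le> B \<omega> v - B \<omega> u} \<union> {\<omega>\<in>space M. - a \<le> B \<omega> v - B \<omega> u \<and> B \<omega> v - B \<omega> u < 0}"
      using a by auto
    then have "prob {\<omega>\<in>space M. B \<omega> v - B \<omega> u \<in> {-a..}} \<le>
          prob {\<omega>\<in>space M. 0 \<le> B \<omega> v - B \<omega> u} + prob {\<omega>\<in>space M. - a \<le> B \<omega> v - B \<omega> u \<and> B \<omega> v - B \<omega> u < 0}"
      by (simp only:) (intro measure_subadditive emeasure_finite; measurable)
    moreover have "prob {\<omega>\<in>space M. 0 \<le> B \<omega> v - B \<omega> u} = 1/2" by (rule nd_half[OF DD sv])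
    moreover have "prob {\<omega>\<in>space M. - a \<le> B \<omega> v - B \<omega> u \<and> B \<omega> v - B \<omega> u < 0} \<le> a / sqrt (v - u)"
      by (rule nd_interval[OF DD sv]) (use a in simp)
    ultimately show ?thesis by simp
  qed
  also have "prob {\<omega>\<in>space M. a < B \<omega> u} \<le> (sqrt u)\<^sup>2 / a\<^sup>2"
    by (rule nd_tail[OF Du _ a]) (use uv in simp)
  finally have f: "prob {\<omega>\<in>space M. 0 \<le> B \<omega> u \<and> 0 \<le> B \<omega> v} \<le> 1/2 * (1/2 + a / sqrt (v - u)) + (sqrt u)\<^sup>2 / a\<^sup>2" by auto
  have su: "(sqrt u)\<^sup>2 = u" using uv by simp
  have f2: "prob {\<omega>\<in>space M. 0 \<le> B \<omega> u \<and> 0 \<le> B \<omega> v} \<le> 1/2 * (1/2 + a / sqrt (v - u)) + u / a\<^sup>2"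
    using f unfolding su .
  have "0 \<le> a / sqrt (v - u)" using a sv by simp
  then show ?thesis using f2 by (rule aux_lin)
qed

lemma bm_rc:
  assumes bm: "std_brownian_motion M B" and w: "\<omega> \<in> space M" and t: "0 \<le> t"
  shows "(B \<omega> \<longlongrightarrow> B \<omega> t) (at_right t)"
proof -
  have "continuous_on {0..} (B \<omega>)" by (rule bm_cont[OF bm w])
  then have "(B \<omega> \<longlongrightarrow> B \<omega> t) (at t within {0..})" using t unfolding continuous_on_def by simp
  then show ?thesis by (rule tendsto_within_subset) (use t in auto)
qed

lemma bm_joint:
  assumes bm: "std_brownian_motion M B"
  shows "(\<lambda>p. B (fst p) (max 0 (snd p))) \<in> borel_measurable (M \<Otimes>\<^sub>M (lborel :: real measure))"
  by (rule joint_meas) (auto intro: bm_rc[OF bm] bm_meas[OF bm])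

lemma bm_pair_sf:
  assumes bm: "std_brownian_motion M B"
  shows "pair_sigma_finite M (lborel :: real measure)"
proof -
  interpret prob_space M by (rule bm_ps[OF bm])
  show ?thesis unfolding pair_sigma_finite_def using sigma_finite_lborel sigma_finite_measure_axioms by simp
qed

lemma bm_zero_set:
  assumes bm: "std_brownian_motion M B"
  shows "AE \<omega> in M. emeasure lborel {u::real. 0 < u \<and> B \<omega> (max 0 u) = 0} = 0"
proof -
  interpret prob_space M by (rule bm_ps[OF bm])
  interpret PS: pair_sigma_finite M "lborel :: real measure" by (rule bm_pair_sf[OF bm])
  note jm[measurable] = bm_joint[OF bm]
  define A where "A = {p \<in> space (M \<Otimes>\<^sub>M (lborel :: real measure)). 0 < snd p \<and> B (fst p) (max 0 (snd p)) = 0}"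
  have A: "A \<in> sets (M \<Otimes>\<^sub>M lborel)" unfolding A_def by measurable
  have "emeasure (M \<Otimes>\<^sub>M lborel) A = (\<integral>\<^sup>+u. emeasure M ((\<lambda>x. (x, u)) -` A) \<partial>lborel)"
    by (rule PS.emeasure_pair_measure_alt2[OF A])
  also have "\<dots> = (\<integral>\<^sup>+(u::real). 0 \<partial>lborel)"
  proof (rule Nonnegative_Lebesgue_Integration.nn_integral_cong)
    fix u :: real
    show "emeasure M ((\<lambda>x. (x, u)) -` A) = 0"
    proof (cases "0 < u")
      case True
      then have "(\<lambda>x. (x, u)) -` A = {\<omega>\<in>space M. B \<omega> u = 0}"
        unfolding A_def by (auto simp: space_pair_measure)
      moreover have "measure M {\<omega>\<in>space M. B \<omega> u = 0} = 0" by (rule bm_nonzero[OF bm True])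
      ultimately show ?thesis by (simp add: emeasure_eq_measure)
    next
      case False
      then have "(\<lambda>x. (x, u)) -` A = {}" unfolding A_def by auto
      then show ?thesis by simp
    qed
  qed
  finally have z: "emeasure (M \<Otimes>\<^sub>M lborel) A = 0" by simp
  have "emeasure (M \<Otimes>\<^sub>M lborel) A = (\<integral>\<^sup>+\<omega>. emeasure lborel (Pair \<omega> -` A) \<partial>M)"
    by (rule lborel.emeasure_pair_measure_alt[OF A])
  with z have "(\<integral>\<^sup>+\<omega>. emeasure lborel (Pair \<omega> -` A) \<partial>M) = 0" by simp
  then have "AE \<omega> in M. emeasure lborel (Pair \<omega> -` A) = 0"
    using nn_integral_0_iff_AE[OF lborel.measurable_emeasure_Pair[OF A]] by simp
  note ae = this
  have eq: "\<And>\<omega>. \<omega> \<in> space M \<Longrightarrow> Pair \<omega> -` A = {u. 0 < u \<and> B \<omega> (max 0 u) = 0}"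
    unfolding A_def by (auto simp: space_pair_measure)
  show ?thesis using ae AE_space by eventually_elim (simp add: eq)
qed

lemma thin_of_null:
  fixes X :: "real \<Rightarrow> real"
  assumes cX: "continuous_on {0..} X" and N: "emeasure lborel {u. 0 < u \<and> X (max 0 u) = 0} = 0"
  shows "thin X"
  unfolding thin_def
proof (intro allI impI)
  fix S \<eta> :: real assume \<eta>: "0 < \<eta>"
  have mX: "(\<lambda>u. X (max 0 u)) \<in> borel_measurable borel" by (rule cont_meas[OF cX])
  let ?g = "\<lambda>u. if X u = 0 then 1 else 0::real"
  let ?f = "\<lambda>k u. if \<bar>X u\<bar> < 1 / real (Suc k) then 1 else 0::real"
  have fint: "?f k integrable_on {0..S}" for k
  proof -
    have "(\<lambda>u. if X u \<in> {x. \<bar>x\<bar> < 1 / real (Suc k)} then 1 else 0::real) integrable_on {0..S}"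
      by (rule ind_integrable[OF mX]) (auto intro: borel_open open_Collect_less continuous_intros)
    then show ?thesis by simp
  qed
  have lim: "(\<lambda>k. integral {0..S} (?f k)) \<longlonglongrightarrow> integral {0..S} ?g"
  proof (rule dominated_convergence(2)[where h="\<lambda>u. 1"])
    show "\<And>k. ?f k integrable_on {0..S}" by (rule fint)
    show "(\<lambda>u. 1::real) integrable_on {0..S}" by (rule integrable_const_ivl)
    show "\<And>k x. x \<in> {0..S} \<Longrightarrow> norm (?f k x) \<le> 1" by simp
    fix x :: real assume "x \<in> {0..S}"
    show "(\<lambda>k. ?f k x) \<longlonglongrightarrow> ?g x"
    proof (cases "X x = 0")
      case True then show ?thesis by simp
    next
      case False
      then have "0 < \<bar>X x\<bar>" by simp
      then obtain k0 where k0: "inverse (real (Suc k0)) < \<bar>X x\<bar>" using reals_Archimedean by blast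
      have "\<forall>\<^sub>F k in sequentially. ?f k x = 0"
      proof (rule eventually_sequentiallyI[of k0])
        fix k assume "k0 \<le> k"
        then have "1 / real (Suc k) \<le> inverse (real (Suc k0))"
          by (simp add: inverse_eq_divide frac_le)
        then show "?f k x = 0" using k0 by auto
      qed
      then have "(\<lambda>k. ?f k x) \<longlonglongrightarrow> 0" by (rule tendsto_eventually)
      then show ?thesis using False by simp
    qed
  qed
  have g0: "integral {0..S} ?g = 0"
  proof -
    let ?Z = "{u. 0 < u \<and> X (max 0 u) = 0}"
    have "?Z = (\<lambda>u. X (max 0 u)) -` {0} \<inter> {0<..}" by auto
    then have "?Z \<in> sets borel" using measurable_sets[OF mX, of "{0}"] by auto
    then have "?Z \<in> null_sets lborel" using N by (simp add: null_sets_def)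
    then have "?Z \<in> null_sets lebesgue" by (rule null_sets_completionI)
    then have neg: "negligible (insert 0 ?Z)" by (simp add: negligible_iff_null_sets[symmetric])
    have "integral {0..S} ?g = integral {0..S} (\<lambda>u. 0::real)"
    proof (rule integral_spike[OF neg])
      fix x assume "x \<in> {0..S} - insert 0 ?Z"
      then show "0 = ?g x" by auto
    qed
    then show ?thesis by simp
  qed
  from lim g0 obtain k where "integral {0..S} (?f k) < \<eta>"
    using \<eta> by (metis (no_types, lifting) LIMSEQ_D diff_zero real_norm_def abs_less_iff order_refl)
  moreover have "0 < 1 / real (Suc k)" by simp
  ultimately show "\<exists>\<delta>>0. integral {0..S} (\<lambda>u. if \<bar>X u\<bar> < \<delta> then 1 else 0) < \<eta>" by blast
qed

primrec blk :: "nat \<Rightarrow> real" where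
  "blk 0 = 1"
| "blk (Suc k) = 4 * 8^(Suc k) * (blk k + 1)"

lemma blk_ge1: "1 \<le> blk k"
proof (induction k)
  case 0 then show ?case by simp
next
  case (Suc k)
  have "1 \<le> blk k + 1" using Suc by simp
  moreover have "1 \<le> (4::real) * 8^(Suc k)" using one_le_power[of "8::real" "Suc k"] by linarith
  ultimately have "1 * 1 \<le> 4 * 8^(Suc k) * (blk k + 1)" by (intro mult_mono) auto
  then show ?case by simp
qed

lemma blk_step: "blk k + 1 \<le> blk (Suc k)"
proof -
  have "1 \<le> (4::real) * 8^(Suc k)" using one_le_power[of "8::real" "Suc k"] by linarith
  then have "1 * (blk k + 1) \<le> 4 * 8^(Suc k) * (blk k + 1)" using blk_ge1[of k] by (intro mult_right_mono) auto
  then show ?thesis by simp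
qed

lemma blk_mono: "j \<le> m \<Longrightarrow> blk j \<le> blk m"
proof (induction m)
  case 0 then show ?case by simp
next
  case (Suc m)
  show ?case
  proof (cases "j = Suc m")
    case True then show ?thesis by simp
  next
    case False then have "j \<le> m" using Suc.prems by simp
    then show ?thesis using Suc.IH blk_step[of m] by simp
  qed
qed

lemma blk_gap:
  assumes jk: "j < k" and u: "u \<in> {blk j..blk j + 1}" and v: "v \<in> {blk k..blk k + 1}"
  shows "0 < u" "u < v" "u * 8^k \<le> v - u"
proof -
  obtain m where k: "k = Suc m" using jk by (cases k) auto
  have jm: "j \<le> m" using jk k by simp
  let ?b = "blk m + 1"
  have ub: "u \<le> ?b" using u blk_mono[OF jm] by simp
  have vb: "4 * 8^k * ?b \<le> v" using v k by simp
  show "0 < u" using u blk_ge1[of j] by simp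
  have b1: "1 \<le> ?b" using blk_ge1[of m] by simp
  have p: "1 \<le> (8::real)^k" by (simp add: one_le_power)
  have "u * 8^k \<le> ?b * 8^k" using ub by (intro mult_right_mono) auto
  also have "\<dots> \<le> 4 * 8^k * ?b - ?b"
  proof -
    have p3: "1 \<le> 3 * (8::real)^k" using p by linarith
    have "?b * 1 \<le> ?b * (3 * 8^k)" using b1 p3 by (intro mult_left_mono) auto
    then show ?thesis by (simp add: algebra_simps)
  qed
  also have "\<dots> \<le> v - u" using vb ub by simp
  finally show "u * 8^k \<le> v - u" .
  moreover have "u * 1 \<le> u * 8^k" by (rule mult_left_mono) (use p \<open>0 < u\<close> in auto)
  ultimately show "u < v" using \<open>0 < u\<close> by linarith
qed

lemma pair_blk:
  assumes bm: "std_brownian_motion M B" and jk: "j < k" and u: "u \<in> {blk j..blk j + 1}" and v: "v \<in> {blk k..blk k + 1}"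
  shows "measure M {\<omega>\<in>space M. 0 \<le> B \<omega> u \<and> 0 \<le> B \<omega> v} \<le> 1/4 + 2 * (1/2)^k"
proof -
  note g = blk_gap[OF jk u v]
  have vu: "0 < v - u" using g by simp
  define a where "a = sqrt (v - u) / 2^k"
  have a: "0 < a" using vu unfolding a_def by simp
  have "measure M {\<omega>\<in>space M. 0 \<le> B \<omega> u \<and> 0 \<le> B \<omega> v} \<le> 1/4 + a / sqrt (v - u) + u / a\<^sup>2"
    by (rule bm_pair[OF bm g(1) g(2) a])
  also have "a / sqrt (v - u) = (1/2)^k" using vu unfolding a_def by (simp add: power_one_over)
  also have "u / a\<^sup>2 \<le> (1/2)^k"
  proof -
    have "(4::real)^k = (2*2)^k" by simp
    also have "\<dots> = 2^k * 2^k" by (rule power_mult_distrib)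
    finally have f4: "(4::real)^k = 2^k * 2^k" .
    have a2: "a\<^sup>2 = (v - u) / 4^k" unfolding a_def f4 using vu
      by (simp add: power_divide power2_eq_square)
    have "u / a\<^sup>2 = u * 4^k / (v - u)" unfolding a2 using vu by (simp add: field_simps)
    also have "\<dots> \<le> (1/2)^k"
    proof -
      have "(8::real)^k = (4*2)^k" by simp
      also have "\<dots> = 4^k * 2^k" by (rule power_mult_distrib)
      finally have e8: "(8::real)^k = 4^k * 2^k" .
      have "u * 4^k * 2^k \<le> v - u" using g(3) unfolding e8 by (simp add: mult.assoc)
      then show ?thesis using vu by (simp add: field_simps power_one_over)
    qed
    finally show ?thesis .
  qed
  finally show ?thesis by simp
qed

definition Iv :: "nat \<Rightarrow> real set" where "Iv k = {blk k..blk k + 1}"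

definition Rn :: "('a \<Rightarrow> real \<Rightarrow> real) \<Rightarrow> nat \<Rightarrow> 'a \<Rightarrow> ennreal" where
  "Rn B k \<omega> = emeasure lborel {u \<in> Iv k. 0 \<le> B \<omega> u}"

definition Aset :: "'a measure \<Rightarrow> ('a \<Rightarrow> real \<Rightarrow> real) \<Rightarrow> nat \<Rightarrow> ('a \<times> real) set" where
  "Aset M B k = {p \<in> space (M \<Otimes>\<^sub>M lborel). snd p \<in> Iv k \<and> 0 \<le> B (fst p) (max 0 (snd p))}"

definition cjk :: "nat \<Rightarrow> nat \<Rightarrow> real" where
  "cjk j k = 1/4 + (if j = k then 1 else 0) + 2 * (1/2)^j + 2 * (1/2)^k"

lemma Iv_pos: "u \<in> Iv k \<Longrightarrow> 1 \<le> u"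
  unfolding Iv_def using blk_ge1[of k] by auto

lemma Iv_max: "u \<in> Iv k \<Longrightarrow> max 0 u = u"
  using Iv_pos[of u k] by simp

lemma Aset_sets:
  assumes bm: "std_brownian_motion M B"
  shows "Aset M B k \<in> sets (M \<Otimes>\<^sub>M lborel)"
proof -
  note jm[measurable] = bm_joint[OF bm]
  show ?thesis unfolding Aset_def Iv_def by measurable
qed

lemma Aset_sec: "\<omega> \<in> space M \<Longrightarrow> Pair \<omega> -` Aset M B k = {u \<in> Iv k. 0 \<le> B \<omega> u}"
  unfolding Aset_def by (auto simp: space_pair_measure Iv_max)

lemma Aset_sec2: "(\<lambda>\<omega>. (\<omega>, u)) -` Aset M B k = (if u \<in> Iv k then {\<omega>\<in>space M. 0 \<le> B \<omega> u} else {})"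
  unfolding Aset_def by (auto simp: space_pair_measure Iv_max)

lemma Rn_meas:
  assumes bm: "std_brownian_motion M B"
  shows "Rn B k \<in> borel_measurable M"
proof -
  have "(\<lambda>\<omega>. emeasure lborel (Pair \<omega> -` Aset M B k)) \<in> borel_measurable M"
    by (rule lborel.measurable_emeasure_Pair[OF Aset_sets[OF bm]])
  then show ?thesis
    by (rule measurable_cong[THEN iffD1, rotated]) (simp add: Rn_def Aset_sec)
qed

lemma Rn_sets: "std_brownian_motion M B \<Longrightarrow> \<omega> \<in> space M \<Longrightarrow> {u \<in> Iv k. 0 \<le> B \<omega> u} \<in> sets lborel"
  using sets_Pair1[OF Aset_sets] Aset_sec by metis

lemma Iv_measure: "emeasure lborel (Iv k) = 1"
  unfolding Iv_def by simp

lemma Rn_le1: "Rn B k \<omega> \<le> 1"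
proof -
  have "Rn B k \<omega> \<le> emeasure lborel (Iv k)" unfolding Rn_def by (rule emeasure_mono) (auto simp: Iv_def)
  then show ?thesis by (simp add: Iv_measure)
qed

lemma Rn_exp:
  assumes bm: "std_brownian_motion M B"
  shows "(\<integral>\<^sup>+\<omega>. Rn B k \<omega> \<partial>M) = ennreal (1/2)"
proof -
  interpret prob_space M by (rule bm_ps[OF bm])
  interpret PS: pair_sigma_finite M "lborel :: real measure" by (rule bm_pair_sf[OF bm])
  have A: "Aset M B k \<in> sets (M \<Otimes>\<^sub>M lborel)" by (rule Aset_sets[OF bm])
  have "(\<integral>\<^sup>+\<omega>. Rn B k \<omega> \<partial>M) = (\<integral>\<^sup>+\<omega>. emeasure lborel (Pair \<omega> -` Aset M B k) \<partial>M)"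
    by (rule nn_integral_cong) (simp add: Rn_def Aset_sec)
  also have "\<dots> = emeasure (M \<Otimes>\<^sub>M lborel) (Aset M B k)"
    by (rule lborel.emeasure_pair_measure_alt[OF A, symmetric])
  also have "\<dots> = (\<integral>\<^sup>+u. emeasure M ((\<lambda>x. (x, u)) -` Aset M B k) \<partial>lborel)"
    by (rule PS.emeasure_pair_measure_alt2[OF A])
  also have "\<dots> = (\<integral>\<^sup>+(u::real). ennreal (1/2) * indicator (Iv k) u \<partial>lborel)"
  proof (rule nn_integral_cong)
    fix u :: real
    show "emeasure M ((\<lambda>x. (x, u)) -` Aset M B k) = ennreal (1/2) * indicator (Iv k) u"
    proof (cases "u \<in> Iv k")
      case True
      have "0 < u" using Iv_pos[OF True] by simp
      then have h: "measure M {\<omega>\<in>space M. 0 \<le> B \<omega> u} = 1/2" by (rule bm_half[OF bm])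
      have e: "emeasure M {\<omega>\<in>space M. 0 \<le> B \<omega> u} = ennreal (1/2)" using h by (simp only: emeasure_eq_measure)
      have s: "(\<lambda>x. (x, u)) -` Aset M B k = {\<omega>\<in>space M. 0 \<le> B \<omega> u}" using True by (simp add: Aset_sec2)
      have i: "indicator (Iv k) u = (1::ennreal)" using True by simp
      show ?thesis by (simp only: s e i mult_1_right)
    next
      case False then show ?thesis by (simp add: Aset_sec2)
    qed
  qed
  also have "\<dots> = ennreal (1/2) * emeasure lborel (Iv k)"
    by (rule nn_integral_cmult_indicator) (simp add: Iv_def)
  also have "\<dots> = ennreal (1/2)" by (simp only: Iv_measure mult_1_right)
  finally show ?thesis .
qed

definition A2 :: "'a measure \<Rightarrow> ('a \<Rightarrow> real \<Rightarrow> real) \<Rightarrow> nat \<Rightarrow> nat \<Rightarrow> ('a \<times> real \<times> real) set" where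
  "A2 M B j k = {p \<in> space (M \<Otimes>\<^sub>M (lborel \<Otimes>\<^sub>M lborel)). fst (snd p) \<in> Iv j \<and> snd (snd p) \<in> Iv k \<and>
      0 \<le> B (fst p) (max 0 (fst (snd p))) \<and> 0 \<le> B (fst p) (max 0 (snd (snd p)))}"

lemma A2_sets:
  assumes bm: "std_brownian_motion M B"
  shows "A2 M B j k \<in> sets (M \<Otimes>\<^sub>M (lborel \<Otimes>\<^sub>M lborel))"
proof -
  have h1: "(\<lambda>p. (fst p, fst (snd p))) \<in> (M \<Otimes>\<^sub>M (lborel \<Otimes>\<^sub>M lborel)) \<rightarrow>\<^sub>M (M \<Otimes>\<^sub>M (lborel :: real measure))"
    by measurable
  have h2: "(\<lambda>p. (fst p, snd (snd p))) \<in> (M \<Otimes>\<^sub>M (lborel \<Otimes>\<^sub>M lborel)) \<rightarrow>\<^sub>M (M \<Otimes>\<^sub>M (lborel :: real measure))"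
    by measurable
  have m1[measurable]: "(\<lambda>p. B (fst p) (max 0 (fst (snd p)))) \<in> borel_measurable (M \<Otimes>\<^sub>M ((lborel :: real measure) \<Otimes>\<^sub>M lborel))"
    using measurable_compose[OF h1 bm_joint[OF bm]] by simp
  have m2[measurable]: "(\<lambda>p. B (fst p) (max 0 (snd (snd p)))) \<in> borel_measurable (M \<Otimes>\<^sub>M ((lborel :: real measure) \<Otimes>\<^sub>M lborel))"
    using measurable_compose[OF h2 bm_joint[OF bm]] by simp
  show ?thesis unfolding A2_def Iv_def by measurable
qed

lemma A2_sec: "\<omega> \<in> space M \<Longrightarrow> Pair \<omega> -` A2 M B j k = {u \<in> Iv j. 0 \<le> B \<omega> u} \<times> {v \<in> Iv k. 0 \<le> B \<omega> v}"
  unfolding A2_def by (auto simp: space_pair_measure Iv_max)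

lemma A2_sec2: "(\<lambda>\<omega>. (\<omega>, w)) -` A2 M B j k =
   (if w \<in> Iv j \<times> Iv k then {\<omega>\<in>space M. 0 \<le> B \<omega> (fst w) \<and> 0 \<le> B \<omega> (snd w)} else {})"
  unfolding A2_def by (auto simp: space_pair_measure Iv_max mem_Times_iff)

lemma pair_cjk:
  assumes bm: "std_brownian_motion M B" and u: "u \<in> Iv j" and v: "v \<in> Iv k"
  shows "measure M {\<omega>\<in>space M. 0 \<le> B \<omega> u \<and> 0 \<le> B \<omega> v} \<le> cjk j k"
proof -
  interpret prob_space M by (rule bm_ps[OF bm])
  have p1: "0 \<le> 2 * (1/2::real)^j" "0 \<le> 2 * (1/2::real)^k" by simp_all
  consider "j < k" | "k < j" | "j = k" by linarith
  then show ?thesis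
  proof cases
    case 1
    have "measure M {\<omega>\<in>space M. 0 \<le> B \<omega> u \<and> 0 \<le> B \<omega> v} \<le> 1/4 + 2 * (1/2)^k"
      by (rule pair_blk[OF bm 1]) (use u v in \<open>auto simp: Iv_def\<close>)
    moreover have "cjk j k = 1/4 + 2 * (1/2)^j + 2 * (1/2)^k" using 1 by (simp add: cjk_def)
    ultimately show ?thesis using p1 by linarith
  next
    case 2
    have h: "measure M {\<omega>\<in>space M. 0 \<le> B \<omega> v \<and> 0 \<le> B \<omega> u} \<le> 1/4 + 2 * (1/2)^j"
      by (rule pair_blk[OF bm 2]) (use u v in \<open>auto simp: Iv_def\<close>)
    have eqs: "{\<omega>\<in>space M. 0 \<le> B \<omega> v \<and> 0 \<le> B \<omega> u} = {\<omega>\<in>space M. 0 \<le> B \<omega> u \<and> 0 \<le> B \<omega> v}" by auto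
    have "measure M {\<omega>\<in>space M. 0 \<le> B \<omega> u \<and> 0 \<le> B \<omega> v} \<le> 1/4 + 2 * (1/2)^j" using h unfolding eqs .
    moreover have "cjk j k = 1/4 + 2 * (1/2)^j + 2 * (1/2)^k" using 2 by (simp add: cjk_def)
    ultimately show ?thesis using p1 by linarith
  next
    case 3
    have "measure M {\<omega>\<in>space M. 0 \<le> B \<omega> u \<and> 0 \<le> B \<omega> v} \<le> 1" by (rule prob_le_1)
    moreover have "cjk j k = 1/4 + 1 + 2 * (1/2)^j + 2 * (1/2)^k" using 3 by (simp add: cjk_def)
    ultimately show ?thesis using p1 by linarith
  qed
qed

lemma cjk_nonneg: "0 \<le> cjk j k"
  unfolding cjk_def by simp

lemma RnRn_exp:
  assumes bm: "std_brownian_motion M B"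
  shows "(\<integral>\<^sup>+\<omega>. Rn B j \<omega> * Rn B k \<omega> \<partial>M) \<le> ennreal (cjk j k)"
proof -
  interpret prob_space M by (rule bm_ps[OF bm])
  have sfL2: "sigma_finite_measure ((lborel :: real measure) \<Otimes>\<^sub>M lborel)"
    by (rule sigma_finite_pair_measure[OF sigma_finite_lborel sigma_finite_lborel])
  interpret PS2: pair_sigma_finite M "(lborel :: real measure) \<Otimes>\<^sub>M lborel"
    unfolding pair_sigma_finite_def using sfL2 sigma_finite_measure_axioms by simp
  have A: "A2 M B j k \<in> sets (M \<Otimes>\<^sub>M (lborel \<Otimes>\<^sub>M lborel))" by (rule A2_sets[OF bm])
  have "(\<integral>\<^sup>+\<omega>. Rn B j \<omega> * Rn B k \<omega> \<partial>M) = (\<integral>\<^sup>+\<omega>. emeasure (lborel \<Otimes>\<^sub>M lborel) (Pair \<omega> -` A2 M B j k) \<partial>M)"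
  proof (rule nn_integral_cong)
    fix \<omega> assume w: "\<omega> \<in> space M"
    have "emeasure (lborel \<Otimes>\<^sub>M lborel) ({u \<in> Iv j. 0 \<le> B \<omega> u} \<times> {v \<in> Iv k. 0 \<le> B \<omega> v})
        = emeasure lborel {u \<in> Iv j. 0 \<le> B \<omega> u} * emeasure lborel {v \<in> Iv k. 0 \<le> B \<omega> v}"
      by (rule lborel.emeasure_pair_measure_Times) (rule Rn_sets[OF bm w])+
    then show "Rn B j \<omega> * Rn B k \<omega> = emeasure (lborel \<Otimes>\<^sub>M lborel) (Pair \<omega> -` A2 M B j k)"
      by (simp add: A2_sec[OF w] Rn_def)
  qed
  also have "\<dots> = emeasure (M \<Otimes>\<^sub>M (lborel \<Otimes>\<^sub>M lborel)) (A2 M B j k)"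
    by (rule sigma_finite_measure.emeasure_pair_measure_alt[OF sfL2 A, symmetric])
  also have "\<dots> = (\<integral>\<^sup>+w. emeasure M ((\<lambda>x. (x, w)) -` A2 M B j k) \<partial>(lborel \<Otimes>\<^sub>M lborel))"
    by (rule PS2.emeasure_pair_measure_alt2[OF A])
  also have "\<dots> \<le> (\<integral>\<^sup>+w. ennreal (cjk j k) * indicator (Iv j \<times> Iv k) w \<partial>(lborel \<Otimes>\<^sub>M lborel))"
  proof (rule nn_integral_mono)
    fix w :: "real \<times> real"
    show "emeasure M ((\<lambda>x. (x, w)) -` A2 M B j k) \<le> ennreal (cjk j k) * indicator (Iv j \<times> Iv k) w"
    proof (cases "w \<in> Iv j \<times> Iv k")
      case True
      have "measure M {\<omega>\<in>space M. 0 \<le> B \<omega> (fst w) \<and> 0 \<le> B \<omega> (snd w)} \<le> cjk j k"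
        by (rule pair_cjk[OF bm]) (use True in auto)
      then have "emeasure M {\<omega>\<in>space M. 0 \<le> B \<omega> (fst w) \<and> 0 \<le> B \<omega> (snd w)} \<le> ennreal (cjk j k)"
        by (simp add: emeasure_eq_measure ennreal_leI)
      then show ?thesis using True by (simp add: A2_sec2)
    next
      case False then show ?thesis by (simp add: A2_sec2)
    qed
  qed
  also have "\<dots> = ennreal (cjk j k) * emeasure (lborel \<Otimes>\<^sub>M lborel) (Iv j \<times> Iv k)"
    by (rule nn_integral_cmult_indicator) (simp add: Iv_def)
  also have "emeasure ((lborel :: real measure) \<Otimes>\<^sub>M lborel) (Iv j \<times> Iv k) = 1"
  proof -
    have "emeasure ((lborel :: real measure) \<Otimes>\<^sub>M lborel) (Iv j \<times> Iv k) = emeasure lborel (Iv j) * emeasure lborel (Iv k)"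
      by (rule lborel.emeasure_pair_measure_Times) (simp_all add: Iv_def)
    then show ?thesis by (simp add: Iv_measure)
  qed
  finally show ?thesis by simp
qed

definition Rr :: "('a \<Rightarrow> real \<Rightarrow> real) \<Rightarrow> nat \<Rightarrow> 'a \<Rightarrow> real" where
  "Rr B k \<omega> = enn2real (Rn B k \<omega>)"

definition Sn :: "('a \<Rightarrow> real \<Rightarrow> real) \<Rightarrow> nat \<Rightarrow> 'a \<Rightarrow> real" where
  "Sn B n \<omega> = (\<Sum>k<n. Rr B k \<omega>)"

lemma Rr_bounds: "0 \<le> Rr B k \<omega>" "Rr B k \<omega> \<le> 1" "ennreal (Rr B k \<omega>) = Rn B k \<omega>"
proof -
  have le: "Rn B k \<omega> \<le> 1" by (rule Rn_le1)
  then have lt: "Rn B k \<omega> < top" using ennreal_one_less_top le_less_trans by blast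
  show "0 \<le> Rr B k \<omega>" unfolding Rr_def by simp
  show "Rr B k \<omega> \<le> 1" unfolding Rr_def using le by (intro enn2real_leI) auto
  show "ennreal (Rr B k \<omega>) = Rn B k \<omega>" unfolding Rr_def using lt by simp
qed

lemma Rr_meas: "std_brownian_motion M B \<Longrightarrow> Rr B k \<in> borel_measurable M"
  unfolding Rr_def[abs_def] using Rn_meas by measurable

lemma Rr_int: 
  assumes bm: "std_brownian_motion M B"
  shows "integrable M (Rr B k)" "integrable M (\<lambda>\<omega>. Rr B j \<omega> * Rr B k \<omega>)"
proof -
  interpret prob_space M by (rule bm_ps[OF bm])
  note m[measurable] = Rr_meas[OF bm]
  show "integrable M (Rr B k)"
    by (rule integrable_const_bound[where B=1]) (auto simp: Rr_bounds)
  show "integrable M (\<lambda>\<omega>. Rr B j \<omega> * Rr B k \<omega>)"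
  proof (rule integrable_const_bound[where B=1])
    show "AE x in M. norm (Rr B j x * Rr B k x) \<le> 1"
      using Rr_bounds[of B j] Rr_bounds[of B k] by (auto intro!: mult_le_one simp: abs_mult)
  qed measurable
qed

lemma Rr_exp:
  assumes bm: "std_brownian_motion M B"
  shows "integral\<^sup>L M (Rr B k) = 1/2"
proof -
  have "integral\<^sup>L M (Rr B k) = enn2real (\<integral>\<^sup>+\<omega>. ennreal (Rr B k \<omega>) \<partial>M)"
    by (rule integral_eq_nn_integral[OF Rr_meas[OF bm]]) (simp add: Rr_bounds)
  also have "(\<integral>\<^sup>+\<omega>. ennreal (Rr B k \<omega>) \<partial>M) = ennreal (1/2)"
    using Rn_exp[OF bm, of k] by (simp only: Rr_bounds(3))
  also have "enn2real (ennreal (1/2)) = 1/2" by (rule enn2real_ennreal) simp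
  finally show ?thesis .
qed

lemma RR_exp:
  assumes bm: "std_brownian_motion M B"
  shows "integral\<^sup>L M (\<lambda>\<omega>. Rr B j \<omega> * Rr B k \<omega>) \<le> cjk j k"
proof -
  note m[measurable] = Rr_meas[OF bm]
  have "integral\<^sup>L M (\<lambda>\<omega>. Rr B j \<omega> * Rr B k \<omega>) = enn2real (\<integral>\<^sup>+\<omega>. ennreal (Rr B j \<omega> * Rr B k \<omega>) \<partial>M)"
    by (rule integral_eq_nn_integral) (auto simp: Rr_bounds)
  also have "(\<integral>\<^sup>+\<omega>. ennreal (Rr B j \<omega> * Rr B k \<omega>) \<partial>M) = (\<integral>\<^sup>+\<omega>. Rn B j \<omega> * Rn B k \<omega> \<partial>M)"
    by (simp add: ennreal_mult Rr_bounds)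
  also have "enn2real \<dots> \<le> cjk j k" by (rule enn2real_leI[OF cjk_nonneg RnRn_exp[OF bm]])
  finally show ?thesis .
qed

lemma geo_sum: "(\<Sum>i<n. (1/2::real)^i) \<le> 2"
proof -
  have "(\<Sum>i<n. (1/2::real)^i) \<le> (\<Sum>i. (1/2::real)^i)"
    by (rule sum_le_suminf[OF summable_geometric]) auto
  also have "\<dots> = 2" by (subst suminf_geometric) auto
  finally show ?thesis .
qed

lemma cjk_sum: "(\<Sum>j<n. \<Sum>k<n. cjk j k) \<le> real n ^ 2 / 4 + 9 * real n"
proof -
  let ?G = "\<Sum>i<n. (1/2::real)^i"
  have inner: "(\<Sum>k<n. cjk j k) = real n / 4 + (if j < n then 1 else 0) + 2 * real n * (1/2)^j + 2 * ?G" for j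
    unfolding cjk_def by (simp add: sum.distrib sum_distrib_left[symmetric] of_nat_mult)
  have "(\<Sum>j<n. \<Sum>k<n. cjk j k) = (\<Sum>j<n. real n / 4 + 1 + 2 * real n * (1/2)^j + 2 * ?G)"
    by (rule sum.cong) (auto simp: inner)
  also have "\<dots> = real n * real n / 4 + real n + 2 * real n * ?G + 2 * real n * ?G"
    by (simp add: sum.distrib sum_distrib_left[symmetric] algebra_simps)
  also have "\<dots> \<le> real n * real n / 4 + real n + 2 * real n * 2 + 2 * real n * 2"
    using geo_sum[of n] by (intro add_mono mult_left_mono) auto
  finally show ?thesis by (simp add: power2_eq_square)
qed

lemma Sn_meas: "std_brownian_motion M B \<Longrightarrow> Sn B n \<in> borel_measurable M"
  unfolding Sn_def[abs_def] using Rr_meas by measurable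

lemma Sn_exp:
  assumes bm: "std_brownian_motion M B"
  shows "integral\<^sup>L M (Sn B n) = real n / 2"
proof -
  have "integral\<^sup>L M (Sn B n) = (\<Sum>k<n. integral\<^sup>L M (Rr B k))"
    unfolding Sn_def by (rule Bochner_Integration.integral_sum) (rule Rr_int[OF bm])
  then show ?thesis by (simp add: Rr_exp[OF bm])
qed

lemma Sn2_exp:
  assumes bm: "std_brownian_motion M B"
  shows "integral\<^sup>L M (\<lambda>\<omega>. (Sn B n \<omega>)\<^sup>2) \<le> real n ^ 2 / 4 + 9 * real n"
proof -
  have sq: "(Sn B n \<omega>)\<^sup>2 = (\<Sum>j<n. \<Sum>k<n. Rr B j \<omega> * Rr B k \<omega>)" for \<omega>
    unfolding Sn_def power2_eq_square by (rule sum_product)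
  have "integral\<^sup>L M (\<lambda>\<omega>. (Sn B n \<omega>)\<^sup>2) = integral\<^sup>L M (\<lambda>\<omega>. \<Sum>j<n. \<Sum>k<n. Rr B j \<omega> * Rr B k \<omega>)"
    by (simp add: sq)
  also have "\<dots> = (\<Sum>j<n. integral\<^sup>L M (\<lambda>\<omega>. \<Sum>k<n. Rr B j \<omega> * Rr B k \<omega>))"
    by (rule Bochner_Integration.integral_sum) (intro Bochner_Integration.integrable_sum Rr_int(2)[OF bm])
  also have "\<dots> = (\<Sum>j<n. \<Sum>k<n. integral\<^sup>L M (\<lambda>\<omega>. Rr B j \<omega> * Rr B k \<omega>))"
    by (intro sum.cong refl Bochner_Integration.integral_sum Rr_int(2)[OF bm])
  also have "\<dots> \<le> (\<Sum>j<n. \<Sum>k<n. cjk j k)"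
    by (intro sum_mono RR_exp[OF bm])
  also have "\<dots> \<le> real n ^ 2 / 4 + 9 * real n" by (rule cjk_sum)
  finally show ?thesis .
qed

lemma Sn_cheb:
  assumes bm: "std_brownian_motion M B" and n: "0 < n"
  shows "measure M {\<omega>\<in>space M. real n / 4 \<le> \<bar>Sn B n \<omega> - real n / 2\<bar>} \<le> 144 / real n"
proof -
  interpret prob_space M by (rule bm_ps[OF bm])
  note m[measurable] = Sn_meas[OF bm]
  have i1: "integrable M (Sn B n)" unfolding Sn_def[abs_def] by (intro Bochner_Integration.integrable_sum Rr_int(1)[OF bm])
  have i2: "integrable M (\<lambda>\<omega>. (Sn B n \<omega>)\<^sup>2)"
  proof -
    have "(\<lambda>\<omega>. (Sn B n \<omega>)\<^sup>2) = (\<lambda>\<omega>. \<Sum>j<n. \<Sum>k<n. Rr B j \<omega> * Rr B k \<omega>)"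
      unfolding Sn_def power2_eq_square by (simp add: sum_product)
    then show ?thesis by (simp add: Bochner_Integration.integrable_sum Rr_int(2)[OF bm])
  qed
  have pos: "0 < real n / 4" using n by simp
  have c: "prob {\<omega>\<in>space M. real n / 4 \<le> \<bar>Sn B n \<omega> - expectation (Sn B n)\<bar>} \<le> variance (Sn B n) / (real n / 4)\<^sup>2"
    by (rule Chebyshev_inequality[OF m _ pos]) (use i2 in \<open>simp add: power2_eq_square\<close>)
  have var: "variance (Sn B n) \<le> 9 * real n"
  proof -
    have "variance (Sn B n) = expectation (\<lambda>\<omega>. (Sn B n \<omega>)\<^sup>2) - (expectation (Sn B n))\<^sup>2"
      by (rule variance_eq[OF i1 i2])
    then have v: "variance (Sn B n) = expectation (\<lambda>\<omega>. (Sn B n \<omega>)\<^sup>2) - (real n / 2)\<^sup>2"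
      unfolding Sn_exp[OF bm] .
    have "(real n / 2)\<^sup>2 = real n ^ 2 / 4" by (simp add: power_divide)
    then show ?thesis using v Sn2_exp[OF bm, of n] by linarith
  qed
  have "variance (Sn B n) / (real n / 4)\<^sup>2 \<le> 9 * real n / (real n / 4)\<^sup>2"
    by (rule divide_right_mono[OF var]) simp
  with c have "prob {\<omega>\<in>space M. real n / 4 \<le> \<bar>Sn B n \<omega> - real n / 2\<bar>} \<le> 9 * real n / (real n / 4)\<^sup>2"
    unfolding Sn_exp[OF bm] by linarith
  also have "9 * real n / (real n / 4)\<^sup>2 = 144 / real n" using n by (simp add: power2_eq_square field_simps)
  finally show ?thesis .
qed

lemma Rr_integral:
  assumes bm: "std_brownian_motion M B" and w: "\<omega> \<in> space M"
  shows "Rr B k \<omega> = integral (Iv k) (indf (B \<omega>))"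
proof -
  let ?S = "{u \<in> Iv k. 0 \<le> B \<omega> u}"
  have S: "?S \<in> sets lborel" by (rule Rn_sets[OF bm w])
  have "Rr B k \<omega> = measure lborel ?S" unfolding Rr_def Rn_def measure_def ..
  also have "\<dots> = measure lebesgue ?S" using S by simp
  also have "\<dots> = integral (Iv k) (indicator {u. 0 \<le> B \<omega> u})"
  proof -
    have eq: "{u. 0 \<le> B \<omega> u} \<inter> Iv k = ?S" by auto
    have "?S \<in> sets lebesgue" using S by (metis sets_completionI_sets)
    moreover have "bounded ?S" by (rule bounded_subset[of "Iv k"]) (auto simp: Iv_def)
    ultimately have "?S \<in> lmeasurable" by (rule bounded_set_imp_lmeasurable[rotated])
    then have "integral (Iv k) (indicator {u. 0 \<le> B \<omega> u}) = measure lebesgue ({u. 0 \<le> B \<omega> u} \<inter> Iv k)"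
      unfolding eq[symmetric] by (rule integral_indicator)
    then show ?thesis unfolding eq by simp
  qed
  also have "indicator {u. 0 \<le> B \<omega> u} = indf (B \<omega>)"
    by (rule ext) (simp add: indf_def indicator_def)
  finally show ?thesis .
qed

lemma occ_sum:
  assumes g: "good X"
  shows "(\<Sum>k<n. integral (Iv k) (indf X)) \<le> occ X (blk n)"
proof (induction n)
  case 0
  have "occ X 0 \<le> occ X (blk 0)" by (rule occ_mono[OF g]) simp
  then show ?case by simp
next
  case (Suc n)
  have b0: "0 \<le> blk n" using blk_ge1[of n] by simp
  have "(\<Sum>k<Suc n. integral (Iv k) (indf X)) = (\<Sum>k<n. integral (Iv k) (indf X)) + integral (Iv n) (indf X)"
    by simp
  also have "\<dots> \<le> occ X (blk n) + integral (Iv n) (indf X)" using Suc by simp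
  also have "integral (Iv n) (indf X) = occ X (blk n + 1) - occ X (blk n)"
    unfolding Iv_def using occ_diff[OF g b0, of "blk n + 1"] by simp
  also have "occ X (blk n) + (occ X (blk n + 1) - occ X (blk n)) = occ X (blk n + 1)" by simp
  also have "\<dots> \<le> occ X (blk (Suc n))" by (rule occ_mono[OF g blk_step])
  finally show ?case .
qed

lemma Sn_null:
  assumes bm: "std_brownian_motion M B"
  shows "AE \<omega> in M. \<exists>n. real c < Sn B n \<omega>"
proof -
  interpret prob_space M by (rule bm_ps[OF bm])
  note m[measurable] = Sn_meas[OF bm]
  define N where "N = {\<omega>\<in>space M. \<forall>n. Sn B n \<omega> \<le> real c}"
  have N: "N \<in> sets M" unfolding N_def by measurable
  have bnd: "prob N \<le> 144 / real n" if n: "4 * c + 1 \<le> n" for n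
  proof -
    have npos: "0 < n" using n by simp
    have "N \<subseteq> {\<omega>\<in>space M. real n / 4 \<le> \<bar>Sn B n \<omega> - real n / 2\<bar>}"
    proof
      fix \<omega> assume "\<omega> \<in> N"
      then have w: "\<omega> \<in> space M" "Sn B n \<omega> \<le> real c" unfolding N_def by auto
      have "real (4 * c + 1) \<le> real n" using n by (simp only: of_nat_le_iff)
      then have "4 * real c + 1 \<le> real n" by simp
      then have "real n / 4 \<le> \<bar>Sn B n \<omega> - real n / 2\<bar>" using w(2) by linarith
      then show "\<omega> \<in> {\<omega>\<in>space M. real n / 4 \<le> \<bar>Sn B n \<omega> - real n / 2\<bar>}" using w(1) by simp
    qed
    then have "prob N \<le> prob {\<omega>\<in>space M. real n / 4 \<le> \<bar>Sn B n \<omega> - real n / 2\<bar>}"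
      by (intro finite_measure_mono) measurable
    also have "\<dots> \<le> 144 / real n" by (rule Sn_cheb[OF bm npos])
    finally show ?thesis .
  qed
  have "prob N = 0"
  proof (rule ccontr)
    assume "prob N \<noteq> 0"
    then have p: "0 < prob N" using measure_nonneg[of M N] by linarith
    obtain n :: nat where n: "max (real (4 * c + 1)) (144 / prob N) < real n" using reals_Archimedean2 by blast
    then have n1: "4 * c + 1 \<le> n" by simp
    have "144 / prob N < real n" using n by simp
    then have "144 < real n * prob N" using p by (simp only: pos_divide_less_eq)
    moreover have "0 < real n" using n1 by simp
    ultimately have "144 / real n < prob N" by (simp only: pos_divide_less_eq mult.commute)
    with bnd[OF n1] show False by simp
  qed
  then have "N \<in> null_sets M" using N by (simp add: emeasure_eq_measure null_sets_def)
  moreover have "{\<omega>\<in>space M. \<not> (\<exists>n. real c < Sn B n \<omega>)} \<subseteq> N" unfolding N_def by (auto simp: not_less)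
  ultimately show ?thesis by (rule AE_I')
qed

lemma bm_unb:
  assumes bm: "std_brownian_motion M B"
  shows "AE \<omega> in M. \<forall>c. \<exists>s\<ge>0. c \<le> occ (B \<omega>) s"
proof -
  have "AE \<omega> in M. \<forall>c::nat. \<exists>n. real c < Sn B n \<omega>"
    unfolding AE_all_countable using Sn_null[OF bm] by blast
  then show ?thesis using AE_space
  proof eventually_elim
    case (elim \<omega>)
    have g: "good (B \<omega>)" by (rule good_meas[OF cont_meas[OF bm_cont[OF bm elim(2)]]])
    show ?case
    proof
      fix c :: real
      obtain n where n: "real (nat \<lceil>c\<rceil>) < Sn B n \<omega>" using elim(1) by blast
      have "Sn B n \<omega> = (\<Sum>k<n. integral (Iv k) (indf (B \<omega>)))"
        unfolding Sn_def using Rr_integral[OF bm elim(2)] by simp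
      also have "\<dots> \<le> occ (B \<omega>) (blk n)" by (rule occ_sum[OF g])
      finally have "c \<le> occ (B \<omega>) (blk n)" using n by linarith
      moreover have "0 \<le> blk n" using blk_ge1[of n] by simp
      ultimately show "\<exists>s\<ge>0. c \<le> occ (B \<omega>) s" by blast
    qed
  qed
qed

theorem mainTheorem5:
  fixes M :: "'a measure" and B :: "'a \<Rightarrow> real \<Rightarrow> real"
  assumes "std_brownian_motion M B"
  shows "AE \<omega> in M. B \<omega> \<notin> Dg"
proof -
  note bm = assms
  have z: "AE \<omega> in M. emeasure lborel {u::real. 0 < u \<and> B \<omega> (max 0 u) = 0} = 0" by (rule bm_zero_set[OF bm])
  have u: "AE \<omega> in M. \<forall>c. \<exists>s\<ge>0. c \<le> occ (B \<omega>) s" by (rule bm_unb[OF bm])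
  show ?thesis using z u AE_space
  proof eventually_elim
    case (elim \<omega>)
    have c: "continuous_on {0..} (B \<omega>)" by (rule bm_cont[OF bm elim(3)])
    have t: "thin (B \<omega>)" by (rule thin_of_null[OF c elim(1)])
    show ?case by (rule det_main[OF c t elim(2)])
  qed
qed

end
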